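(* Let $\Gamma=(V,E)$ be a connected locally finite graph with root $o$, let $\lambda>1$, and let $(Z_n)$ be the $\lambda$-homesick random walk on $(\Gamma,o)$, assumed recurrent. Let $\rho_0=0$ and $\rho_k=\inf\{n>\rho_{k-1}:Z_n=o\}$. Then for every $0<c<1$ and every integer $k\ge\left(\frac{5(\lambda-1)}{\deg o}\right)^{1/c}$, \[\Pr\Big(|\mathrm{range}(Z_{\rho_k})|\le\frac N4\Big)\le e^{-N/8},\qquad\text{where } N=\min\Big\{\big|B_{\frac{c\log k}{\log\lambda}}\big|,\Big\lfloor\frac{\lambda-1}{\deg o}k^{1-c}\Big\rfloor\Big\}.\]
   Context: The $\lambda$-homesick random walk on $(\Gamma,o)$: $Z_0=o$; from a vertex $v$, letting $v_1,\dots,v_j$ be the neighbors with $\mathrm{dist}(o,v_i)=\mathrm{dist}(o,v)-1$ and $v'_1,\dots,v'_k$ the other neighbors, the walk moves to each $v_i$ with probability $\frac{\lambda}{\lambda j+k}$ and to each $v'_i$ with probability $\frac{1}{\lambda j+k}$. $B_r=\{v\in V:\mathrm{dist}(o,v)\le r\}$ for real $r\ge0$ (so $B_r=B_{\lfloor r\rfloor}$). $\mathrm{range}(Z_n)=\{Z_0,\dots,Z_n\}$. *)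

theory Defs
  imports "HOL-Probability.Probability"
begin

text \<open>A graph is given by an adjacency relation on the vertex type 'a
  (all elements of 'a are vertices).\<close>

definition simple_graph :: "('a \<Rightarrow> 'a \<Rightarrow> bool) \<Rightarrow> bool" where
  "simple_graph adj \<longleftrightarrow> (\<forall>v w. adj v w \<longrightarrow> adj w v) \<and> (\<forall>v. \<not> adj v v)"

definition locally_finite :: "('a \<Rightarrow> 'a \<Rightarrow> bool) \<Rightarrow> bool" where
  "locally_finite adj \<longleftrightarrow> (\<forall>v. finite {w. adj v w})"

definition graph_connected :: "('a \<Rightarrow> 'a \<Rightarrow> bool) \<Rightarrow> bool" where
  "graph_connected adj \<longleftrightarrow> (\<forall>v w. adj\<^sup>*\<^sup>* v w)"

definition gdeg :: "('a \<Rightarrow> 'a \<Rightarrow> bool) \<Rightarrow> 'a \<Rightarrow> nat" where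
  "gdeg adj v = card {w. adj v w}"

definition gdist :: "('a \<Rightarrow> 'a \<Rightarrow> bool) \<Rightarrow> 'a \<Rightarrow> 'a \<Rightarrow> nat" where
  "gdist adj v w = (LEAST n. (adj ^^ n) v w)"

definition ball_graph :: "('a \<Rightarrow> 'a \<Rightarrow> bool) \<Rightarrow> 'a \<Rightarrow> real \<Rightarrow> 'a set" where
  "ball_graph adj o' r = {v. real (gdist adj o' v) \<le> r}"

definition homesick_p :: "('a \<Rightarrow> 'a \<Rightarrow> bool) \<Rightarrow> 'a \<Rightarrow> real \<Rightarrow> 'a \<Rightarrow> 'a \<Rightarrow> real" where
  "homesick_p adj o' lam v w =
     (let down = {u. adj v u \<and> gdist adj o' u + 1 = gdist adj o' v};
          j = card down;
          k = card {u. adj v u} - j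
      in if adj v w then (if w \<in> down then lam else 1) / (lam * real j + real k) else 0)"

text \<open>Z is (a realisation of) the lambda-homesick random walk on (adj,o) on the
  probability space M: Z_0 = o and the finite-dimensional distributions are
  those of the Markov chain with transition probabilities homesick_p.\<close>
definition is_homesick_walk ::
  "'w measure \<Rightarrow> ('a \<Rightarrow> 'a \<Rightarrow> bool) \<Rightarrow> 'a \<Rightarrow> real \<Rightarrow> (nat \<Rightarrow> 'w \<Rightarrow> 'a) \<Rightarrow> bool" where
  "is_homesick_walk M adj o' lam Z \<longleftrightarrow>
     prob_space M \<and>
     (\<forall>i. Z i \<in> measurable M (count_space UNIV)) \<and>
     (\<forall>n (f :: nat \<Rightarrow> 'a).
        measure M {\<omega> \<in> space M. \<forall>i\<le>n. Z i \<omega> = f i} =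
          (if f 0 = o' then (\<Prod>i<n. homesick_p adj o' lam (f i) (f (Suc i))) else 0))"

text \<open>Successive return times to o: rho_0 = 0, rho_(k+1) = inf{n > rho_k. Z_n = o}.
  (On the null set where a return fails to happen the value is irrelevant.)\<close>
fun return_time :: "(nat \<Rightarrow> 'a) \<Rightarrow> 'a \<Rightarrow> nat \<Rightarrow> nat" where
  "return_time z o' 0 = 0"
| "return_time z o' (Suc k) = (LEAST n. n > return_time z o' k \<and> z n = o')"

end

theory Submission
  imports Defs
begin

locale hs =
  fixes adj :: "'a \<Rightarrow> 'a \<Rightarrow> bool" and o' :: 'a and lam :: real
  assumes sg: "simple_graph adj" and lf: "locally_finite adj" and conn: "graph_connected adj"
    and lam: "lam > 1" and degpos: "gdeg adj o' > 0"
begin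

abbreviation "d \<equiv> gdist adj o'"
definition "nb v = {w. adj v w}"
definition "dn v = {u. adj v u \<and> d u + 1 = d v}"
definition "p v w = homesick_p adj o' lam v w"
definition "mu v = (lam * real (card (dn v)) + real (card (nb v) - card (dn v))) / lam ^ d v"

lemma sym: "adj v w \<Longrightarrow> adj w v" using sg unfolding simple_graph_def by blast
lemma irr: "\<not> adj v v" using sg unfolding simple_graph_def by blast
lemma fin_nb: "finite (nb v)" using lf unfolding locally_finite_def nb_def by blast
lemma dn_sub: "dn v \<subseteq> nb v" unfolding dn_def nb_def by blast

lemma d_ex: "\<exists>n. (adj ^^ n) o' v"
  using conn unfolding graph_connected_def rtranclp_power by blast
lemma d_hit: "(adj ^^ d v) o' v"
  unfolding gdist_def using d_ex by (rule LeastI_ex)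
lemma d_min: "(adj ^^ n) o' v \<Longrightarrow> d v \<le> n"
  unfolding gdist_def by (rule Least_le)
lemma d_adj: "adj v w \<Longrightarrow> d w \<le> Suc (d v)"
  using d_min relpowp_Suc_I[OF d_hit] by blast
lemma d_o: "d o' = 0" using d_min[of 0 o'] by simp
lemma d_zero: "d v = 0 \<Longrightarrow> v = o'" using d_hit[of v] by simp
lemma d_pred: assumes "d v = Suc n" shows "\<exists>y. adj y v \<and> d y = n"
proof -
  from d_hit[of v] assms have "(adj ^^ Suc n) o' v" by simp
  then obtain y where "(adj ^^ n) o' y" "adj y v" by (rule relpowp_Suc_E)
  moreover have "d y \<le> n" using d_min calculation(1) .
  moreover have "d v \<le> Suc (d y)" using d_adj calculation(2) .
  ultimately show ?thesis using assms by (intro exI[of _ y]) auto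
qed

lemma nb_ne: "nb v \<noteq> {}"
proof (cases "d v")
  case 0 then have "v = o'" by (rule d_zero)
  then show ?thesis using degpos unfolding gdeg_def nb_def by (metis card.empty less_irrefl)
next
  case (Suc n) then obtain y where "adj y v" using d_pred by blast
  then show ?thesis using sym unfolding nb_def by blast
qed

lemma p_eq: "p v w = (if adj v w then (if w \<in> dn v then lam else 1) /
   (lam * real (card (dn v)) + real (card (nb v) - card (dn v))) else 0)"
  unfolding p_def homesick_p_def dn_def nb_def Let_def by simp

lemma den_pos: "lam * real (card (dn v)) + real (card (nb v) - card (dn v)) > 0"
proof -
  have "card (nb v) > 0" using nb_ne fin_nb by (simp add: card_gt_0_iff)
  moreover have "card (dn v) \<le> card (nb v)" using card_mono[OF fin_nb dn_sub] .
  ultimately show ?thesis using lam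
    by (cases "card (dn v) = 0") (auto simp: add_pos_nonneg)
qed

lemma p_nonneg: "p v w \<ge> 0"
  using den_pos[of v] lam unfolding p_eq by auto

lemma p_sum: "(\<Sum>w\<in>nb v. p v w) = 1"
proof -
  let ?D = "lam * real (card (dn v)) + real (card (nb v) - card (dn v))"
  have "(\<Sum>w\<in>nb v. p v w) = (\<Sum>w\<in>nb v. (if w \<in> dn v then lam else 1) / ?D)"
    by (rule sum.cong) (auto simp: p_eq nb_def)
  also have "\<dots> = (\<Sum>w\<in>nb v. (if w \<in> dn v then lam else 1)) / ?D"
    by (simp add: sum_divide_distrib)
  also have "(\<Sum>w\<in>nb v. (if w \<in> dn v then lam else 1)) = ?D"
  proof -
    have "(\<Sum>w\<in>nb v. (if w \<in> dn v then lam else 1)) =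
        (\<Sum>w\<in>nb v \<inter> {w. w \<in> dn v}. lam) + (\<Sum>w\<in>nb v \<inter> - {w. w \<in> dn v}. 1)"
      by (rule sum.If_cases[OF fin_nb])
    also have "nb v \<inter> {w. w \<in> dn v} = dn v" using dn_sub by auto
    also have "nb v \<inter> - {w. w \<in> dn v} = nb v - dn v" by auto
    finally have "(\<Sum>w\<in>nb v. (if w \<in> dn v then lam else 1)) = lam * real (card (dn v)) + real (card (nb v - dn v))" by simp
    also have "card (nb v - dn v) = card (nb v) - card (dn v)"
      using card_Diff_subset[OF finite_subset[OF dn_sub fin_nb] dn_sub] .
    finally show ?thesis by simp
  qed
  finally show ?thesis using den_pos[of v] by simp
qed

lemma p_le1: "p v w \<le> 1"
proof (cases "adj v w")
  case True
  then have "w \<in> nb v" by (simp add: nb_def)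
  then have "p v w \<le> (\<Sum>w\<in>nb v. p v w)"
    by (intro member_le_sum p_nonneg fin_nb) auto
  then show ?thesis using p_sum by simp
qed (simp add: p_eq)

lemma p_pos: "adj v w \<Longrightarrow> p v w > 0"
  using den_pos[of v] lam unfolding p_eq by auto

lemma mu_p_adj: assumes "adj v w" shows "mu v * p v w = 1 / lam ^ min (d v) (d w)"
proof -
  have D: "lam * real (card (dn v)) + real (card (nb v) - card (dn v)) > 0" by (rule den_pos)
  have "mu v * p v w = (if w \<in> dn v then lam else 1) / lam ^ d v"
    using assms D lam unfolding mu_def p_eq by (auto simp: divide_simps)
  also have "\<dots> = 1 / lam ^ min (d v) (d w)"
  proof -
    have a: "d w \<le> Suc (d v)" "d v \<le> Suc (d w)" using d_adj assms sym by auto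
    show ?thesis
    proof (cases "d w + 1 = d v")
      case True
      then have "w \<in> dn v" using assms by (simp add: dn_def)
      then show ?thesis using True lam by (auto simp: min_def simp flip: True)
    next
      case False
      then have "w \<notin> dn v" by (simp add: dn_def)
      moreover have "d v \<le> d w" using False a by linarith
      ultimately show ?thesis by (simp add: min_def)
    qed
  qed
  finally show ?thesis .
qed

lemma rev_bal: "mu v * p v w = mu w * p w v"
proof (cases "adj v w")
  case True then show ?thesis using mu_p_adj[OF True] mu_p_adj[OF sym[OF True]] by (simp add: min.commute)
next
  case False then have "\<not> adj w v" using sym by blast
  then show ?thesis using False by (simp add: p_eq)
qed

lemma mu_pos: "mu v > 0"
  using den_pos[of v] lam unfolding mu_def by simp

lemma mu_o: "mu o' = real (gdeg adj o')"
proof -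
  have "dn o' = {}" unfolding dn_def by (simp add: d_o)
  then show ?thesis unfolding mu_def gdeg_def nb_def by (simp add: d_o)
qed

end

context hs begin

fun W :: "'a list \<Rightarrow> real" where
  "W [] = 1" | "W [x] = 1" | "W (x # y # ys) = p x y * W (y # ys)"

lemma W_nonneg: "W xs \<ge> 0"
  by (induction xs rule: W.induct) (auto intro: mult_nonneg_nonneg p_nonneg)

lemma W_Cons: "ys \<noteq> [] \<Longrightarrow> W (x # ys) = p x (hd ys) * W ys"
  by (cases ys) auto

lemma W_split: "i < length g \<Longrightarrow> W g = W (take (Suc i) g) * W (drop i g)"
proof (induction g arbitrary: i)
  case Nil then show ?case by simp
next
  case (Cons x g)
  show ?case
  proof (cases i)
    case 0 then show ?thesis by simp
  next
    case (Suc i')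
    with Cons.prems have "i' < length g" by simp
    then have gne: "g \<noteq> []" by auto
    have "W (x # g) = p x (hd g) * W g" using W_Cons[OF gne] .
    moreover have "W g = W (take (Suc i') g) * W (drop i' g)" using Cons.IH[OF \<open>i' < length g\<close>] .
    moreover have "W (take (Suc i) (x # g)) = p x (hd g) * W (take (Suc i') g)"
      using gne Suc by (simp add: W_Cons)
    ultimately show ?thesis using Suc by simp
  qed
qed

lemma W_app: assumes "a \<noteq> []" "b \<noteq> []" "last a = hd b"
  shows "W (butlast a @ b) = W a * W b"
proof -
  have la: "length a - 1 < length (butlast a @ b)" using assms by (cases b) auto
  have t1: "take (Suc (length a - 1)) (butlast a @ b) = butlast a @ take 1 b"
  proof -
    have "Suc (length a - 1) - length (butlast a) = Suc 0" using assms(1) by (cases a) auto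
    then show ?thesis by (simp only: take_append) simp
  qed
  have t2: "take 1 b = [last a]" using assms by (cases b) auto
  have t: "take (Suc (length a - 1)) (butlast a @ b) = a"
    unfolding t1 t2 using assms(1) by simp
  have dr: "drop (length a - 1) (butlast a @ b) = b" using assms by simp
  show ?thesis using W_split[OF la] t dr by simp
qed

lemma W_snoc: "a \<noteq> [] \<Longrightarrow> W (a @ [x]) = W a * p (last a) x"
proof (induction a)
  case (Cons y a)
  show ?case
  proof (cases "a = []")
    case True then show ?thesis by simp
  next
    case False
    then have "W (y # a @ [x]) = p y (hd a) * W (a @ [x])" by (simp add: W_Cons)
    also have "\<dots> = p y (hd a) * (W a * p (last a) x)" using Cons.IH False by simp
    finally show ?thesis using False by (simp add: W_Cons)
  qed
qed simp

lemma W_rev: "g \<noteq> [] \<Longrightarrow> mu (hd g) * W g = mu (last g) * W (rev g)"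
proof (induction g rule: W.induct)
  case (3 x y ys)
  have "mu x * W (x # y # ys) = (mu x * p x y) * W (y # ys)" by simp
  also have "\<dots> = p y x * (mu y * W (y # ys))" using rev_bal[of x y] by simp
  also have "mu y * W (y # ys) = mu (last (y # ys)) * W (rev (y # ys))" using 3 by simp
  also have "p y x * (mu (last (y # ys)) * W (rev (y # ys))) = mu (last (y#ys)) * W (rev (y # ys) @ [x])"
    by (subst W_snoc) auto
  finally show ?case by simp
qed auto

fun wk :: "'a \<Rightarrow> nat \<Rightarrow> 'a list set" where
  "wk x 0 = {[x]}" | "wk x (Suc n) = (\<Union>y\<in>nb x. Cons x ` wk y n)"

lemma wk_iff: "g \<in> wk x n \<longleftrightarrow> length g = Suc n \<and> hd g = x \<and> successively adj g"
proof (induction n arbitrary: x g)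
  case 0 then show ?case by (cases g) auto
next
  case (Suc n)
  show ?case
  proof
    assume "g \<in> wk x (Suc n)"
    then obtain y ys where "adj x y" "ys \<in> wk y n" "g = x # ys" by (auto simp: nb_def)
    then show "length g = Suc (Suc n) \<and> hd g = x \<and> successively adj g"
      using Suc.IH by (cases ys) auto
  next
    assume A: "length g = Suc (Suc n) \<and> hd g = x \<and> successively adj g"
    then have "g \<noteq> []" "tl g \<noteq> []" by (auto simp: length_0_conv[symmetric] simp del: length_0_conv)
    then obtain ys where g: "g = x # ys" "ys \<noteq> []" using A by (metis list.collapse)
    then have "adj x (hd ys)" "successively adj ys" "length ys = Suc n"
      using A by (auto simp: successively_Cons)
    then have "ys \<in> wk (hd ys) n" using Suc.IH by auto
    then show "g \<in> wk x (Suc n)" using g \<open>adj x (hd ys)\<close> by (auto simp: nb_def)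
  qed
qed

lemma fin_wk: "finite (wk x n)"
  by (induction n arbitrary: x) (auto intro: fin_nb)

definition "wle x n = (\<Union>m\<le>n. wk x m)"

lemma wle_iff: "g \<in> wle x n \<longleftrightarrow> g \<noteq> [] \<and> length g \<le> Suc n \<and> hd g = x \<and> successively adj g"
proof
  assume "g \<in> wle x n"
  then obtain m where "m \<le> n" "g \<in> wk x m" unfolding wle_def by blast
  then show "g \<noteq> [] \<and> length g \<le> Suc n \<and> hd g = x \<and> successively adj g"
    unfolding wk_iff by auto
next
  assume A: "g \<noteq> [] \<and> length g \<le> Suc n \<and> hd g = x \<and> successively adj g"
  then have "g \<in> wk x (length g - 1)" unfolding wk_iff by auto
  moreover have "length g - 1 \<le> n" using A by auto
  ultimately show "g \<in> wle x n" unfolding wle_def by blast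
qed

lemma fin_wle: "finite (wle x n)"
  unfolding wle_def by (auto intro: fin_wk)

lemma wle_mono: "n \<le> n' \<Longrightarrow> wle x n \<subseteq> wle x n'"
  by (auto simp: wle_iff)

lemma wle_take: assumes "g \<in> wle x n" "0 < k" shows "take k g \<in> wle x n"
proof -
  have A: "g \<noteq> []" "length g \<le> Suc n" "hd g = x" "successively adj g" using assms(1) unfolding wle_iff by auto
  have "successively adj (take k g @ drop k g)" using A by simp
  then have "successively adj (take k g)" unfolding successively_append_iff by blast
  moreover have "take k g \<noteq> []" using A assms(2) by simp
  moreover have "hd (take k g) = x" using A assms(2) by (simp add: hd_take)
  ultimately show ?thesis using A unfolding wle_iff by auto
qed

lemma wle_drop: assumes "g \<in> wle x n" "i < length g" shows "drop i g \<in> wle (g ! i) n"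
proof -
  have A: "g \<noteq> []" "length g \<le> Suc n" "hd g = x" "successively adj g" using assms(1) unfolding wle_iff by auto
  have "successively adj (take i g @ drop i g)" using A by simp
  then have "successively adj (drop i g)" unfolding successively_append_iff by blast
  moreover have "drop i g \<noteq> []" using assms(2) by simp
  moreover have "hd (drop i g) = g ! i" using assms(2) by (simp add: hd_drop_conv_nth)
  ultimately show ?thesis using A unfolding wle_iff by auto
qed

lemma wle_Suc: "wle x (Suc n) = insert [x] (\<Union>y\<in>nb x. Cons x ` wle y n)"
proof (intro set_eqI iffI)
  fix g assume "g \<in> wle x (Suc n)"
  then show "g \<in> insert [x] (\<Union>y\<in>nb x. Cons x ` wle y n)"
    unfolding wle_iff
    by (cases g; cases "tl g") (auto simp: nb_def wle_iff)
next
  fix g assume "g \<in> insert [x] (\<Union>y\<in>nb x. Cons x ` wle y n)"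
  then show "g \<in> wle x (Suc n)"
    by (auto simp: wle_iff nb_def successively_Cons)
qed

definition "PS x n P = (\<Sum>g\<in>{g\<in>wle x n. P g}. W g)"

lemma PS_nonneg: "PS x n P \<ge> 0"
  unfolding PS_def by (intro sum_nonneg W_nonneg)

lemma PS_mono: "(\<And>g. g \<in> wle x n \<Longrightarrow> P g \<Longrightarrow> Q g) \<Longrightarrow> PS x n P \<le> PS x n Q"
  unfolding PS_def by (intro sum_mono2 W_nonneg) (auto intro: finite_subset[OF _ fin_wle])

lemma PS_Suc: "PS x (Suc n) P = (if P [x] then 1 else 0) + (\<Sum>y\<in>nb x. p x y * PS y n (\<lambda>ys. P (x # ys)))"
proof -
  have S: "{g\<in>wle x (Suc n). P g} = {g\<in>{[x]}. P g} \<union> (\<Union>y\<in>nb x. Cons x ` {ys\<in>wle y n. P (x # ys)})"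
    unfolding wle_Suc by blast
  have disj: "{g\<in>{[x]}. P g} \<inter> (\<Union>y\<in>nb x. Cons x ` {ys\<in>wle y n. P (x # ys)}) = {}"
    by (force simp: wle_iff)
  have f1: "finite (\<Union>y\<in>nb x. Cons x ` {ys\<in>wle y n. P (x # ys)})"
    by (intro finite_UN_I fin_nb finite_imageI) (simp add: fin_wle)
  have "PS x (Suc n) P = (\<Sum>g\<in>{g\<in>{[x]}. P g}. W g) + (\<Sum>g\<in>(\<Union>y\<in>nb x. Cons x ` {ys\<in>wle y n. P (x # ys)}). W g)"
    unfolding PS_def S by (rule sum.union_disjoint) (use disj f1 in simp_all)
  also have "(\<Sum>g\<in>{g\<in>{[x]}. P g}. W g) = (if P [x] then 1 else 0)"
  proof (cases "P [x]")
    case True then have "{g\<in>{[x]}. P g} = {[x]}" by blast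
    then show ?thesis using True by simp
  next
    case False then have "{g\<in>{[x]}. P g} = {}" by blast
    then show ?thesis using False by simp
  qed
  also have "(\<Sum>g\<in>(\<Union>y\<in>nb x. Cons x ` {ys\<in>wle y n. P (x # ys)}). W g) =
      (\<Sum>y\<in>nb x. (\<Sum>g\<in>Cons x ` {ys\<in>wle y n. P (x # ys)}. W g))"
  proof (rule sum.UNION_disjoint)
    show "finite (nb x)" by (rule fin_nb)
    show "\<forall>y\<in>nb x. finite (Cons x ` {ys \<in> wle y n. P (x # ys)})" using fin_wle by simp
    show "\<forall>y\<in>nb x. \<forall>z\<in>nb x. y \<noteq> z \<longrightarrow> Cons x ` {ys \<in> wle y n. P (x # ys)} \<inter> Cons x ` {ys \<in> wle z n. P (x # ys)} = {}"
      by (auto simp: wle_iff)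
  qed
  also have "\<dots> = (\<Sum>y\<in>nb x. p x y * PS y n (\<lambda>ys. P (x # ys)))"
  proof (rule sum.cong[OF refl])
    fix y assume "y \<in> nb x"
    have "(\<Sum>g\<in>Cons x ` {ys\<in>wle y n. P (x # ys)}. W g) = (\<Sum>ys\<in>{ys\<in>wle y n. P (x # ys)}. W (x # ys))"
      by (rule sum.reindex_cong[where l="Cons x"]) (simp_all add: inj_on_def)
    also have "\<dots> = (\<Sum>ys\<in>{ys\<in>wle y n. P (x # ys)}. p x y * W ys)"
      by (rule sum.cong) (auto simp: wle_iff W_Cons)
    finally show "(\<Sum>g\<in>Cons x ` {ys\<in>wle y n. P (x # ys)}. W g) = p x y * PS y n (\<lambda>ys. P (x # ys))"
      by (simp add: PS_def sum_distrib_left)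
  qed
  finally show ?thesis .
qed

lemma sum_single_P: "(\<Sum>g\<in>{g\<in>{a}. P g}. W g) = (if P a then W a else 0)"
proof (cases "P a")
  case True then have e: "{g\<in>{a}. P g} = {a}" by blast
  show ?thesis unfolding e using True by simp
next
  case False then have e: "{g\<in>{a}. P g} = {}" by blast
  show ?thesis unfolding e using False by simp
qed

lemma PS_0: "PS x 0 P = (if P [x] then 1 else 0)"
proof -
  have "wle x 0 = {[x]}" unfolding wle_def by simp
  then show ?thesis unfolding PS_def using sum_single_P[of "[x]" P] by simp
qed

lemma sum_p_le: "(\<And>y. y \<in> nb x \<Longrightarrow> f y \<le> 1) \<Longrightarrow> (\<And>y. y \<in> nb x \<Longrightarrow> f y \<ge> 0) \<Longrightarrow>
   (\<Sum>y\<in>nb x. p x y * f y) \<le> 1"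
proof -
  assume "\<And>y. y \<in> nb x \<Longrightarrow> f y \<le> 1"
  then have "(\<Sum>y\<in>nb x. p x y * f y) \<le> (\<Sum>y\<in>nb x. p x y)"
    by (intro sum_mono) (simp add: mult_left_le p_nonneg)
  then show ?thesis using p_sum by simp
qed

lemma PS_cong: "(\<And>g. g \<in> wle x n \<Longrightarrow> P g = Q g) \<Longrightarrow> PS x n P = PS x n Q"
  unfolding PS_def by (rule sum.cong) auto

lemma PS_False: "(\<And>g. g \<in> wle x n \<Longrightarrow> \<not> P g) \<Longrightarrow> PS x n P = 0"
proof -
  assume "\<And>g. g \<in> wle x n \<Longrightarrow> \<not> P g"
  then have e: "{g\<in>wle x n. P g} = {}" by blast
  show ?thesis unfolding PS_def e by simp
qed

lemma SUB: "PS x n (\<lambda>g. last g \<in> T \<and> set (butlast g) \<inter> T = {}) \<le> 1"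
proof (induction n arbitrary: x)
  case 0 then show ?case by (simp add: PS_0)
next
  case (Suc n)
  show ?case
  proof (cases "x \<in> T")
    case True
    have "PS y n (\<lambda>ys. last (x # ys) \<in> T \<and> set (butlast (x # ys)) \<inter> T = {}) = 0" for y
    proof (rule PS_False)
      fix g assume "g \<in> wle y n"
      then have "g \<noteq> []" by (simp add: wle_iff)
      then show "\<not> (last (x # g) \<in> T \<and> set (butlast (x # g)) \<inter> T = {})" using True by auto
    qed
    then show ?thesis using True by (simp add: PS_Suc)
  next
    case False
    have "PS y n (\<lambda>ys. last (x # ys) \<in> T \<and> set (butlast (x # ys)) \<inter> T = {}) =
          PS y n (\<lambda>g. last g \<in> T \<and> set (butlast g) \<inter> T = {})" for y
    proof (rule PS_cong)
      fix g assume "g \<in> wle y n"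
      then have "g \<noteq> []" by (simp add: wle_iff)
      then show "(last (x # g) \<in> T \<and> set (butlast (x # g)) \<inter> T = {}) = (last g \<in> T \<and> set (butlast g) \<inter> T = {})"
        using False by auto
    qed
    then have "PS x (Suc n) (\<lambda>g. last g \<in> T \<and> set (butlast g) \<inter> T = {}) =
       (\<Sum>y\<in>nb x. p x y * PS y n (\<lambda>g. last g \<in> T \<and> set (butlast g) \<inter> T = {}))"
      using False by (simp add: PS_Suc)
    also have "\<dots> \<le> 1" by (intro sum_p_le Suc.IH PS_nonneg)
    finally show ?thesis .
  qed
qed

lemma STOCH: "PS x n (\<lambda>g. length g = Suc n) = 1"
proof (induction n arbitrary: x)
  case 0 then show ?case by (simp add: PS_0)
next
  case (Suc n)
  have "PS y n (\<lambda>ys. length (x # ys) = Suc (Suc n)) = 1" for y using Suc.IH by simp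
  then show ?case by (simp add: PS_Suc p_sum)
qed

lemma wk_eq: "wk x n = {g\<in>wle x n. length g = Suc n}"
  by (auto simp: wk_iff wle_iff)

end

context hs begin

lemma SPL:
  assumes fS: "finite S" and fA: "finite A" and fB: "\<And>a. a \<in> A \<Longrightarrow> finite (B a)"
    and sp: "\<And>g. g \<in> S \<Longrightarrow> \<exists>i<length g. take (Suc i) g \<in> A \<and> drop i g \<in> B (take (Suc i) g)"
    and phi: "\<And>g. phi g \<ge> 0"
  shows "(\<Sum>g\<in>S. W g * phi g) \<le> (\<Sum>a\<in>A. W a * (\<Sum>b\<in>B a. W b * phi (butlast a @ b)))"
proof -
  from sp obtain f where f: "\<And>g. g \<in> S \<Longrightarrow> f g < length g \<and> take (Suc (f g)) g \<in> A \<and> drop (f g) g \<in> B (take (Suc (f g)) g)"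
    by metis
  define h where "h g = (take (Suc (f g)) g, drop (f g) g)" for g
  have recon: "butlast (fst (h g)) @ snd (h g) = g" if "g \<in> S" for g
  proof -
    have "f g < length g" using f[OF that] by simp
    then have "butlast (take (Suc (f g)) g) = take (f g) g" by (simp add: butlast_take)
    then show ?thesis unfolding h_def by simp
  qed
  have inj: "inj_on h S"
    by (rule inj_on_inverseI[where g="\<lambda>q. butlast (fst q) @ snd q"]) (rule recon)
  have hS: "h ` S \<subseteq> Sigma A B" using f unfolding h_def by auto
  have fSig: "finite (Sigma A B)" using fA fB by (intro finite_SigmaI)
  let ?F = "\<lambda>q. W (fst q) * (W (snd q) * phi (butlast (fst q) @ snd q))"
  have "(\<Sum>g\<in>S. W g * phi g) = (\<Sum>g\<in>S. ?F (h g))"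
  proof (rule sum.cong[OF refl])
    fix g assume g: "g \<in> S"
    have "W g = W (fst (h g)) * W (snd (h g))" using W_split f[OF g] unfolding h_def by simp
    then show "W g * phi g = ?F (h g)" using recon[OF g] by simp
  qed
  also have "\<dots> = (\<Sum>q\<in>h ` S. ?F q)" using sum.reindex[OF inj, of ?F] by simp
  also have "\<dots> \<le> (\<Sum>q\<in>Sigma A B. ?F q)"
    by (rule sum_mono2[OF fSig hS]) (intro mult_nonneg_nonneg W_nonneg phi)
  also have "\<dots> = (\<Sum>a\<in>A. \<Sum>b\<in>B a. ?F (a, b))"
    using sum.Sigma[OF fA, of B "\<lambda>a b. ?F (a, b)"] fB by (simp add: case_prod_beta)
  also have "\<dots> = (\<Sum>a\<in>A. W a * (\<Sum>b\<in>B a. W b * phi (butlast a @ b)))"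
    by (simp add: sum_distrib_left)
  finally show ?thesis .
qed

lemma CMB:
  assumes fA: "finite A" and fB: "\<And>a. a \<in> A \<Longrightarrow> finite (B a)"
    and inj: "inj_on (\<lambda>(a, b). butlast a @ b) (Sigma A B)"
    and ok: "\<And>a b. a \<in> A \<Longrightarrow> b \<in> B a \<Longrightarrow> a \<noteq> [] \<and> b \<noteq> [] \<and> last a = hd b"
  shows "(\<Sum>a\<in>A. W a * (\<Sum>b\<in>B a. W b)) = (\<Sum>c\<in>(\<lambda>(a, b). butlast a @ b) ` Sigma A B. W c)"
proof -
  have "(\<Sum>c\<in>(\<lambda>(a, b). butlast a @ b) ` Sigma A B. W c) = (\<Sum>q\<in>Sigma A B. W ((\<lambda>(a, b). butlast a @ b) q))"
    using sum.reindex[OF inj, of W] by (simp add: o_def)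
  also have "\<dots> = (\<Sum>q\<in>Sigma A B. W (fst q) * W (snd q))"
    by (rule sum.cong[OF refl]) (auto dest!: ok intro!: W_app)
  also have "\<dots> = (\<Sum>a\<in>A. \<Sum>b\<in>B a. W a * W b)"
    using sum.Sigma[OF fA, of B "\<lambda>a b. W a * W b"] fB by (simp add: case_prod_beta)
  finally show ?thesis by (simp add: sum_distrib_left)
qed

lemma PS_split: "PS x n P = PS x n (\<lambda>g. P g \<and> R g) + PS x n (\<lambda>g. P g \<and> \<not> R g)"
proof -
  have e: "{g\<in>wle x n. P g} = {g\<in>wle x n. P g \<and> R g} \<union> {g\<in>wle x n. P g \<and> \<not> R g}" by blast
  show ?thesis unfolding PS_def e
    by (rule sum.union_disjoint) (auto intro: finite_subset[OF _ fin_wle])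
qed

lemma wle_app: assumes "a \<in> wle x n" "b \<in> wle y m" "last a = y" shows "butlast a @ b \<in> wle x (n + m)"
proof (cases "butlast a = []")
  case True
  then have "a = [x]" using assms(1) unfolding wle_iff by (metis append_butlast_last_id append_self_conv2 list.sel(1))
  then show ?thesis using assms True wle_mono[of m "n+m" y] by auto
next
  case False
  have A: "a \<noteq> []" "length a \<le> Suc n" "hd a = x" "successively adj a" using assms(1) unfolding wle_iff by auto
  have B: "b \<noteq> []" "length b \<le> Suc m" "hd b = y" "successively adj b" using assms(2) unfolding wle_iff by auto
  have "successively adj (butlast a @ [last a])" using A by simp
  then have s1: "successively adj (butlast a)" "adj (last (butlast a)) (last a)"
    unfolding successively_append_iff using False by auto
  have "successively adj (butlast a @ b)" unfolding successively_append_iff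
    using s1 B assms(3) by auto
  moreover have "hd (butlast a @ b) = x" using False A by (metis append_butlast_last_id hd_append2)
  moreover have "length (butlast a @ b) \<le> Suc (n + m)" using A B by auto
  ultimately show ?thesis unfolding wle_iff using B by auto
qed

end

context hs begin

definition "FR x e \<longleftrightarrow> 2 \<le> length e \<and> hd e = x \<and> last e = x \<and> x \<notin> set (butlast (tl e))"

fun KE :: "nat \<Rightarrow> 'a list \<Rightarrow> bool" where
  "KE 0 g = (g = [o'])"
| "KE (Suc j) g = (\<exists>r e. KE j r \<and> FR o' e \<and> g = butlast r @ e)"

lemma KE_props: "KE j r \<Longrightarrow> r \<noteq> [] \<and> hd r = o' \<and> last r = o'"
proof (induction j arbitrary: r)
  case 0 then show ?case by simp
next
  case (Suc j)
  then obtain r' e where "KE j r'" "FR o' e" "r = butlast r' @ e" by auto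
  have P: "r' \<noteq> []" "hd r' = o'" "last r' = o'" using Suc.IH[OF \<open>KE j r'\<close>] by auto
  have E: "e \<noteq> []" "hd e = o'" "last e = o'" using \<open>FR o' e\<close> unfolding FR_def by auto
  have "hd r = o'"
  proof (cases "butlast r' = []")
    case True then show ?thesis using \<open>r = butlast r' @ e\<close> E by simp
  next
    case False then have "hd (butlast r') = hd r'" using hd_append2[OF False, of "[last r']"] append_butlast_last_id[OF P(1)] by simp
    then show ?thesis using \<open>r = butlast r' @ e\<close> False P by simp
  qed
  then show ?case using \<open>r = butlast r' @ e\<close> E by simp
qed

lemma KE1: "KE (Suc 0) e \<longleftrightarrow> FR o' e"
proof -
  have "KE (Suc 0) e \<longleftrightarrow> (\<exists>r e'. r = [o'] \<and> FR o' e' \<and> e = butlast r @ e')"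
    by (simp only: KE.simps)
  also have "\<dots> \<longleftrightarrow> FR o' e" by auto
  finally show ?thesis .
qed

lemma FR_split: assumes "g \<noteq> []" "hd g = x" "last g = x" "2 \<le> length g"
  shows "\<exists>i. 0 < i \<and> i < length g \<and> g ! i = x \<and> FR x (take (Suc i) g)"
proof -
  obtain t where g: "g = x # t" using assms(1,2) by (cases g) auto
  have tne: "t \<noteq> []" using assms(4) g by auto
  have "last t = x" using assms(3) g tne by simp
  then have "x \<in> set t" using tne last_in_set by metis
  then obtain ys zs where t: "t = ys @ x # zs" "x \<notin> set ys" using split_list_first by metis
  let ?i = "Suc (length ys)"
  have 1: "take (Suc ?i) g = x # ys @ [x]" unfolding g t by simp
  have 2: "g ! ?i = x" unfolding g t by simp
  have 3: "?i < length g" unfolding g t by simp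
  have 4: "FR x (x # ys @ [x])" unfolding FR_def using t(2) by simp
  show ?thesis using 1 2 3 4 by (intro exI[of _ ?i]) simp
qed

lemma FH_split: assumes "y \<in> set g"
  shows "\<exists>i<length g. g ! i = y \<and> y \<notin> set (take i g)"
proof -
  obtain ys zs where "g = ys @ y # zs" "y \<notin> set ys" using assms split_list_first by metis
  then show ?thesis by (intro exI[of _ "length ys"]) auto
qed

lemma RT: "KE j r \<Longrightarrow> (\<And>i. i < length r \<Longrightarrow> z i = r ! i) \<Longrightarrow> return_time z o' j = length r - 1"
proof (induction j arbitrary: r)
  case 0 then show ?case by simp
next
  case (Suc j)
  then obtain r' e where KE': "KE j r'" and FRe: "FR o' e" and r: "r = butlast r' @ e" by auto
  have P': "r' \<noteq> []" "hd r' = o'" "last r' = o'" using KE_props[OF KE'] by auto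
  have FRe': "2 \<le> length e" "hd e = o'" "last e = o'" "o' \<notin> set (butlast (tl e))" using FRe unfolding FR_def by auto
  let ?t = "length r' - 1"
  have lbr: "length (butlast r') = ?t" by simp
  have ze: "z (?t + i) = e ! i" if "i < length e" for i
  proof -
    have "?t + i < length r" using r that by simp
    then have "z (?t + i) = r ! (?t + i)" using Suc.prems(2) by blast
    also have "\<dots> = e ! i" unfolding r using lbr by (simp add: nth_append)
    finally show ?thesis .
  qed
  have agree: "z i = r' ! i" if "i < length r'" for i
  proof (cases "i < ?t")
    case True
    then have "z i = r ! i" using Suc.prems(2) r that by auto
    also have "\<dots> = butlast r' ! i" unfolding r using True lbr by (simp add: nth_append)
    also have "\<dots> = r' ! i" using True by (simp add: nth_butlast)
    finally show ?thesis .
  next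
    case False
    then have i: "i = ?t" using that by simp
    have "0 < length e" using FRe'(1) by linarith
    then have "z i = e ! 0" using ze[of 0] i by simp
    also have "\<dots> = o'" using FRe'(1,2) by (cases e) auto
    also have "o' = r' ! i" using P' i by (simp add: last_conv_nth)
    finally show ?thesis .
  qed
  have rt: "return_time z o' j = ?t" using Suc.IH[OF KE' agree] by simp
  have lr: "length r - 1 = ?t + (length e - 1)" using r FRe'(1) P'(1) by (cases r') auto
  show ?case
  proof -
    have "return_time z o' (Suc j) = (LEAST n. n > ?t \<and> z n = o')" using rt by simp
    also have "\<dots> = ?t + (length e - 1)"
    proof (rule Least_equality)
      have "length e - 1 < length e" using FRe'(1) by linarith
      then have "z (?t + (length e - 1)) = e ! (length e - 1)" by (rule ze)
      also have "\<dots> = o'"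
      proof -
        have "e \<noteq> []" using FRe'(1) by auto
        then show ?thesis using FRe'(3) last_conv_nth[of e] by simp
      qed
      finally show "?t < ?t + (length e - 1) \<and> z (?t + (length e - 1)) = o'" using FRe'(1) by simp
    next
      fix n assume n: "?t < n \<and> z n = o'"
      show "?t + (length e - 1) \<le> n"
      proof (rule ccontr)
        assume "\<not> ?thesis"
        define i where "i = n - ?t"
        have i: "n = ?t + i" "0 < i" "i < length e - 1" using n \<open>\<not> ?t + (length e - 1) \<le> n\<close> unfolding i_def by auto
        then have "z n = e ! i" using ze by simp
        moreover have "e ! i \<in> set (butlast (tl e))"
        proof -
          have "butlast (tl e) ! (i - 1) = e ! i" using i FRe'(1) by (cases e) (auto simp: nth_butlast)
          moreover have "i - 1 < length (butlast (tl e))" using i by simp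
          ultimately show ?thesis using nth_mem[of "i - 1" "butlast (tl e)"] by simp
        qed
        ultimately show False using n FRe'(4) by simp
      qed
    qed
    finally show ?thesis using lr by simp
  qed
qed

lemma KE_inj:
  assumes "\<And>a. a \<in> A \<Longrightarrow> KE j a" "\<And>a b. a \<in> A \<Longrightarrow> b \<in> B a \<Longrightarrow> b \<noteq> [] \<and> hd b = o'"
  shows "inj_on (\<lambda>(a, b). butlast a @ b) (Sigma A B)"
proof (rule inj_onI, clarify)
  fix a b a' b' assume m: "a \<in> A" "b \<in> B a" "a' \<in> A" "b' \<in> B a'" and eq: "butlast a @ b = butlast a' @ b'"
  have key: "return_time (\<lambda>i. (butlast a @ b) ! i) o' j = length a - 1" if "a \<in> A" "b \<in> B a" for a b
  proof (rule RT[OF assms(1)[OF that(1)]])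
    fix i assume i: "i < length a"
    have P: "a \<noteq> []" "last a = o'" using KE_props assms(1)[OF that(1)] by auto
    have B: "b \<noteq> []" "hd b = o'" using assms(2)[OF that] by auto
    show "(butlast a @ b) ! i = a ! i"
    proof (cases "i < length a - 1")
      case True then show ?thesis by (simp add: nth_append nth_butlast)
    next
      case False
      then have "i = length a - 1" using i by simp
      then show ?thesis using P B by (simp add: nth_append last_conv_nth hd_conv_nth)
    qed
  qed
  have Pa: "a \<noteq> []" "last a = o'" using KE_props[OF assms(1)[OF m(1)]] by auto
  have Pa': "a' \<noteq> []" "last a' = o'" using KE_props[OF assms(1)[OF m(3)]] by auto
  have "length a - 1 = length a' - 1" using key[OF m(1,2)] key[OF m(3,4)] eq by simp
  then have la: "length (butlast a) = length (butlast a')" by simp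
  have bb: "butlast a = butlast a' \<and> b = b'"
    using append_eq_append_conv[of "butlast a" "butlast a'" b b'] eq la by simp
  have "a = butlast a @ [last a]" using Pa(1) by (rule append_butlast_last_id[symmetric])
  also have "\<dots> = butlast a' @ [last a']" using bb Pa Pa' by simp
  also have "\<dots> = a'" using Pa'(1) by (rule append_butlast_last_id)
  finally show "a = a' \<and> b = b'" using bb by simp
qed

end

context hs begin

definition "Gz z x y n = PS x n (\<lambda>g. last g = y \<and> z \<notin> set g)"

lemma PS_single: "PS x n (\<lambda>g. g = [x]) = 1"
proof -
  have "[x] \<in> wle x n" by (simp add: wle_iff)
  then have e: "{g\<in>wle x n. g = [x]} = {[x]}" by blast
  show ?thesis unfolding PS_def e by simp
qed

lemma HIT: "PS x n (\<lambda>g. last g = y \<and> y \<notin> set (butlast g)) \<le> 1"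
proof -
  have "PS x n (\<lambda>g. last g = y \<and> y \<notin> set (butlast g)) = PS x n (\<lambda>g. last g \<in> {y} \<and> set (butlast g) \<inter> {y} = {})"
    by (rule PS_cong) auto
  then show ?thesis using SUB[of x n "{y}"] by simp
qed

lemma FH:
  assumes inset: "\<And>g. g \<in> wle x n \<Longrightarrow> Q g \<Longrightarrow> y \<in> set g"
    and dr: "\<And>g i. g \<in> wle x n \<Longrightarrow> Q g \<Longrightarrow> i < length g \<Longrightarrow> g ! i = y \<Longrightarrow> y \<notin> set (take i g) \<Longrightarrow> Q' (drop i g)"
  shows "PS x n Q \<le> PS y n Q'"
proof -
  define A where "A = {a\<in>wle x n. last a = y \<and> y \<notin> set (butlast a)}"
  define B where "B = {b\<in>wle y n. Q' b}"
  have fA: "finite A" unfolding A_def using fin_wle by simp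
  have fB: "finite B" unfolding B_def using fin_wle by simp
  have "PS x n Q = (\<Sum>g\<in>{g\<in>wle x n. Q g}. W g * 1)" unfolding PS_def by simp
  also have "\<dots> \<le> (\<Sum>a\<in>A. W a * (\<Sum>b\<in>B. W b * 1))"
  proof (rule SPL[where B="\<lambda>_. B"])
    show "finite {g\<in>wle x n. Q g}" using fin_wle by simp
    show "finite A" by (rule fA)
    show "\<And>a. finite B" by (rule fB)
    show "\<And>g. (0::real) \<le> 1" by simp
    fix g assume g: "g \<in> {g\<in>wle x n. Q g}"
    then have gw: "g \<in> wle x n" and Qg: "Q g" by auto
    have "y \<in> set g" by (rule inset[OF gw Qg])
    from FH_split[OF this] obtain i where i: "i < length g" "g ! i = y" "y \<notin> set (take i g)"
      by blast
    have tk: "take (Suc i) g = take i g @ [y]" using i by (simp add: take_Suc_conv_app_nth)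
    have "take (Suc i) g \<in> wle x n" by (rule wle_take[OF gw]) simp
    then have "take (Suc i) g \<in> A" unfolding A_def using tk i(3) by simp
    moreover have "drop i g \<in> B" unfolding B_def using wle_drop[OF gw i(1)] dr[OF gw Qg i] i(2) by simp
    ultimately show "\<exists>i<length g. take (Suc i) g \<in> A \<and> drop i g \<in> B" using i(1) by (intro exI[of _ i] conjI)
  qed
  also have "\<dots> = (\<Sum>a\<in>A. W a) * (\<Sum>b\<in>B. W b)"
    by (simp only: mult_1_right sum_distrib_right[symmetric])
  also have "\<dots> = PS x n (\<lambda>g. last g = y \<and> y \<notin> set (butlast g)) * PS y n Q'"
    unfolding A_def B_def PS_def by (rule refl)
  also have "\<dots> \<le> 1 * PS y n Q'"
    by (intro mult_right_mono HIT PS_nonneg)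
  finally show ?thesis by simp
qed

lemma rev_wle: assumes "g \<in> wle y n" "last g = x" shows "rev g \<in> wle x n"
proof -
  have A: "g \<noteq> []" "length g \<le> Suc n" "hd g = y" "successively adj g" using assms unfolding wle_iff by auto
  have "successively (\<lambda>a b. adj b a) g"
  proof (rule successively_mono[OF A(4)])
    fix a b assume "adj a b" then show "adj b a" by (rule hs.sym[OF hs_axioms])
  qed
  then have "successively adj (rev g)" by simp
  moreover have "rev g \<noteq> []" "length (rev g) \<le> Suc n" "hd (rev g) = x" using A assms(2) by (auto simp: hd_rev)
  ultimately show ?thesis unfolding wle_iff by blast
qed

lemma REV: "mu y * PS y n (\<lambda>g. last g = x \<and> z \<notin> set g) = mu x * PS x n (\<lambda>g. last g = y \<and> z \<notin> set g)"
proof -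
  define S1 where "S1 = {g\<in>wle y n. last g = x \<and> z \<notin> set g}"
  define S2 where "S2 = {g\<in>wle x n. last g = y \<and> z \<notin> set g}"
  have m1: "rev g \<in> S2" if "g \<in> S1" for g
  proof -
    have g: "g \<in> wle y n" "last g = x" "z \<notin> set g" using that unfolding S1_def by auto
    have "rev g \<in> wle x n" by (rule rev_wle[OF g(1,2)])
    moreover have "g \<noteq> []" "hd g = y" using g(1) unfolding wle_iff by auto
    ultimately show ?thesis unfolding S2_def using g(3) by (simp add: last_rev)
  qed
  have m2: "rev h \<in> S1" if "h \<in> S2" for h
  proof -
    have g: "h \<in> wle x n" "last h = y" "z \<notin> set h" using that unfolding S2_def by auto
    have "rev h \<in> wle y n" by (rule rev_wle[OF g(1,2)])
    moreover have "h \<noteq> []" "hd h = x" using g(1) unfolding wle_iff by auto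
    ultimately show ?thesis unfolding S1_def using g(3) by (simp add: last_rev)
  qed
  have im: "rev ` S1 = S2"
  proof
    show "rev ` S1 \<subseteq> S2" using m1 by blast
    show "S2 \<subseteq> rev ` S1"
    proof
      fix h assume "h \<in> S2"
      then have "rev h \<in> S1" by (rule m2)
      then have "rev (rev h) \<in> rev ` S1" by (rule imageI)
      then show "h \<in> rev ` S1" by simp
    qed
  qed
  have "mu y * PS y n (\<lambda>g. last g = x \<and> z \<notin> set g) = (\<Sum>g\<in>S1. mu y * W g)"
    unfolding PS_def S1_def by (simp add: sum_distrib_left)
  also have "\<dots> = (\<Sum>g\<in>S1. mu x * W (rev g))"
  proof (rule sum.cong[OF refl])
    fix g assume "g \<in> S1"
    then have "g \<noteq> []" "hd g = y" "last g = x" unfolding S1_def wle_iff by auto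
    then show "mu y * W g = mu x * W (rev g)" using W_rev[of g] by simp
  qed
  also have "\<dots> = mu x * (\<Sum>g\<in>S1. W (rev g))" by (simp add: sum_distrib_left)
  also have "(\<Sum>g\<in>S1. W (rev g)) = (\<Sum>h\<in>rev ` S1. W h)"
    using sum.reindex[of rev S1 W] by (simp add: o_def inj_on_def)
  also have "\<dots> = PS x n (\<lambda>g. last g = y \<and> z \<notin> set g)" unfolding im S2_def PS_def by simp
  finally show ?thesis .
qed

lemma TRI: "Gz z x x n \<le> Gz y x x n + mu x / mu y * Gz z y y n"
proof -
  have e1: "Gz z x x n = PS x n (\<lambda>g. (last g = x \<and> z \<notin> set g) \<and> y \<notin> set g) + PS x n (\<lambda>g. (last g = x \<and> z \<notin> set g) \<and> \<not> y \<notin> set g)"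
    unfolding Gz_def by (rule PS_split)
  have i1: "PS x n (\<lambda>g. (last g = x \<and> z \<notin> set g) \<and> y \<notin> set g) \<le> Gz y x x n"
    unfolding Gz_def by (rule PS_mono) auto
  have i2: "PS x n (\<lambda>g. (last g = x \<and> z \<notin> set g) \<and> \<not> y \<notin> set g) \<le> PS y n (\<lambda>g. last g = x \<and> z \<notin> set g)"
  proof (rule FH)
    fix g i assume "(last g = x \<and> z \<notin> set g) \<and> \<not> y \<notin> set g" "i < length g"
    then show "last (drop i g) = x \<and> z \<notin> set (drop i g)" using set_drop_subset[of i g] by auto
  qed simp
  have e2: "PS y n (\<lambda>g. last g = x \<and> z \<notin> set g) = mu x / mu y * PS x n (\<lambda>g. last g = y \<and> z \<notin> set g)"
    using REV[of y n x z] mu_pos[of y] by (simp add: field_simps)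
  have i3: "PS x n (\<lambda>g. last g = y \<and> z \<notin> set g) \<le> Gz z y y n"
    unfolding Gz_def
  proof (rule FH)
    fix g i assume "last g = y \<and> z \<notin> set g" "i < length g"
    then show "last (drop i g) = y \<and> z \<notin> set (drop i g)" using set_drop_subset[of i g] by auto
  next
    fix g assume "g \<in> wle x n" "last g = y \<and> z \<notin> set g"
    then show "y \<in> set g" unfolding wle_iff by auto
  qed
  have "mu x / mu y * PS x n (\<lambda>g. last g = y \<and> z \<notin> set g) \<le> mu x / mu y * Gz z y y n"
    using i3 mu_pos[of x] mu_pos[of y] by (intro mult_left_mono) auto
  then show ?thesis using e1 i1 i2 e2 by linarith
qed

end

context hs begin

lemma NBa: assumes "adj y z" shows "PS y (Suc n) (\<lambda>e. FR y e \<and> z \<notin> set e) \<le> 1 - p y z"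
proof -
  have e0: "PS y (Suc n) (\<lambda>e. FR y e \<and> z \<notin> set e) = (if FR y [y] \<and> z \<notin> set [y] then 1 else 0) +
     (\<Sum>w\<in>nb y. p y w * PS w n (\<lambda>ys. FR y (y # ys) \<and> z \<notin> set (y # ys)))" by (rule PS_Suc)
  have nf: "\<not> FR y [y]" by (simp add: FR_def)
  have b: "PS w n (\<lambda>ys. FR y (y # ys) \<and> z \<notin> set (y # ys)) \<le> (if w = z then 0 else 1)" for w
  proof (cases "w = z")
    case True
    have "PS w n (\<lambda>ys. FR y (y # ys) \<and> z \<notin> set (y # ys)) = 0"
    proof (rule PS_False)
      fix g assume "g \<in> wle w n"
      then have "hd g = w" "g \<noteq> []" unfolding wle_iff by auto
      then have "z \<in> set g" using True hd_in_set by metis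
      then show "\<not> (FR y (y # g) \<and> z \<notin> set (y # g))" by simp
    qed
    then show ?thesis using True by simp
  next
    case False
    have "PS w n (\<lambda>ys. FR y (y # ys) \<and> z \<notin> set (y # ys)) \<le> PS w n (\<lambda>g. last g = y \<and> y \<notin> set (butlast g))"
    proof (rule PS_mono)
      fix g assume "g \<in> wle w n" "FR y (y # g) \<and> z \<notin> set (y # g)"
      then have "g \<noteq> []" "last (y # g) = y" "y \<notin> set (butlast (tl (y # g)))" unfolding FR_def wle_iff by auto
      then show "last g = y \<and> y \<notin> set (butlast g)" by simp
    qed
    then show ?thesis using HIT[of w n y] False by simp
  qed
  have "(\<Sum>w\<in>nb y. p y w * PS w n (\<lambda>ys. FR y (y # ys) \<and> z \<notin> set (y # ys))) \<le> (\<Sum>w\<in>nb y. p y w * (if w = z then 0 else 1))"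
    by (intro sum_mono mult_left_mono p_nonneg b)
  also have "\<dots> = (\<Sum>w\<in>nb y. p y w - (if w = z then p y w else 0))"
    by (rule sum.cong) auto
  also have "\<dots> = (\<Sum>w\<in>nb y. p y w) - (\<Sum>w\<in>nb y. if w = z then p y w else 0)"
    by (rule sum_subtractf)
  also have "(\<Sum>w\<in>nb y. if w = z then p y w else 0) = p y z"
    using sum.delta[OF fin_nb, of z "\<lambda>w. p y w"] assms by (simp add: nb_def)
  finally show ?thesis using e0 nf p_sum[of y] by simp
qed

lemma NB: assumes "adj y z" shows "Gz z y y n \<le> 1 / p y z"
proof (induction n)
  case 0
  have "y \<noteq> z" using assms irr by blast
  then have "Gz z y y 0 = 1" unfolding Gz_def by (simp add: PS_0)
  then show ?case using p_pos[OF assms] p_le1[of y z] by simp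
next
  case (Suc n)
  have pp: "0 < p y z" "p y z \<le> 1" using p_pos[OF assms] p_le1[of y z] by auto
  have e1: "Gz z y y (Suc n) = PS y (Suc n) (\<lambda>g. (last g = y \<and> z \<notin> set g) \<and> g = [y]) + PS y (Suc n) (\<lambda>g. (last g = y \<and> z \<notin> set g) \<and> \<not> g = [y])"
    unfolding Gz_def by (rule PS_split)
  have i1: "PS y (Suc n) (\<lambda>g. (last g = y \<and> z \<notin> set g) \<and> g = [y]) \<le> 1"
    using PS_mono[of y "Suc n" "\<lambda>g. (last g = y \<and> z \<notin> set g) \<and> g = [y]" "\<lambda>g. g = [y]"] PS_single[of y "Suc n"] by simp
  define A where "A = {e\<in>wle y (Suc n). FR y e \<and> z \<notin> set e}"
  define B where "B = {b\<in>wle y n. last b = y \<and> z \<notin> set b}"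
  have "PS y (Suc n) (\<lambda>g. (last g = y \<and> z \<notin> set g) \<and> \<not> g = [y]) =
      (\<Sum>g\<in>{g\<in>wle y (Suc n). (last g = y \<and> z \<notin> set g) \<and> \<not> g = [y]}. W g * 1)" unfolding PS_def by simp
  also have "\<dots> \<le> (\<Sum>a\<in>A. W a * (\<Sum>b\<in>B. W b * 1))"
  proof (rule SPL[where B="\<lambda>_. B"])
    show "finite {g\<in>wle y (Suc n). (last g = y \<and> z \<notin> set g) \<and> \<not> g = [y]}" using fin_wle by simp
    show "finite A" unfolding A_def using fin_wle by simp
    show "\<And>a. a \<in> A \<Longrightarrow> finite B" unfolding B_def using fin_wle by simp
    show "\<And>g. (0::real) \<le> 1" by simp
    fix g assume "g \<in> {g\<in>wle y (Suc n). (last g = y \<and> z \<notin> set g) \<and> \<not> g = [y]}"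
    then have gw: "g \<in> wle y (Suc n)" and gl: "last g = y" and gz: "z \<notin> set g" and gn: "g \<noteq> [y]" by auto
    have G: "g \<noteq> []" "length g \<le> Suc (Suc n)" "hd g = y" using gw unfolding wle_iff by auto
    have "length g \<noteq> 1"
    proof
      assume "length g = 1"
      then have "g = [hd g]" by (cases g) auto
      then show False using gn G by simp
    qed
    moreover have "length g \<noteq> 0" using G(1) by simp
    ultimately have l2: "2 \<le> length g" by linarith
    from FR_split[OF G(1) G(3) gl l2] obtain i where i: "0 < i" "i < length g" "g ! i = y" "FR y (take (Suc i) g)"
      by blast
    have "take (Suc i) g \<in> wle y (Suc n)" by (rule wle_take[OF gw]) simp
    moreover have "z \<notin> set (take (Suc i) g)" using gz set_take_subset[of "Suc i" g] by blast
    ultimately have tA: "take (Suc i) g \<in> A" unfolding A_def using i(4) by simp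
    have dw: "drop i g \<in> wle y (Suc n)" using wle_drop[OF gw i(2)] i(3) by simp
    have "length (drop i g) \<le> Suc n" using G(2) i(1) by simp
    then have "drop i g \<in> wle y n" using dw unfolding wle_iff by auto
    moreover have "last (drop i g) = y" using gl i(2) by simp
    moreover have "z \<notin> set (drop i g)" using gz set_drop_subset[of i g] by blast
    ultimately have "drop i g \<in> B" unfolding B_def by simp
    then show "\<exists>i<length g. take (Suc i) g \<in> A \<and> drop i g \<in> B" using tA i(2) by (intro exI[of _ i] conjI)
  qed
  also have "\<dots> = (\<Sum>a\<in>A. W a) * (\<Sum>b\<in>B. W b)"
    by (simp only: mult_1_right sum_distrib_right[symmetric])
  also have "\<dots> = PS y (Suc n) (\<lambda>e. FR y e \<and> z \<notin> set e) * Gz z y y n"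
    unfolding A_def B_def PS_def Gz_def by (rule refl)
  finally have i2: "PS y (Suc n) (\<lambda>g. (last g = y \<and> z \<notin> set g) \<and> \<not> g = [y]) \<le> PS y (Suc n) (\<lambda>e. FR y e \<and> z \<notin> set e) * Gz z y y n" .
  have "PS y (Suc n) (\<lambda>e. FR y e \<and> z \<notin> set e) * Gz z y y n \<le> (1 - p y z) * (1 / p y z)"
    using NBa[OF assms, of n] Suc.IH PS_nonneg[of y "Suc n"] pp
    by (intro mult_mono) (auto simp: Gz_def PS_nonneg)
  then have "Gz z y y (Suc n) \<le> 1 + (1 - p y z) * (1 / p y z)" using e1 i1 i2 by linarith
  also have "\<dots> = 1 / p y z" using pp by (simp add: field_simps)
  finally show ?case .
qed

lemma Gbound: "d u = D \<Longrightarrow> Gz u o' o' n \<le> mu o' * (\<Sum>i<D. lam ^ i)"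
proof (induction D arbitrary: u)
  case 0
  then have u: "u = o'" by (intro d_zero)
  have "Gz u o' o' n = 0" unfolding Gz_def
  proof (rule PS_False)
    fix g assume "g \<in> wle o' n"
    then have "hd g = o'" "g \<noteq> []" unfolding wle_iff by auto
    then have "o' \<in> set g" using hd_in_set by metis
    then show "\<not> (last g = o' \<and> u \<notin> set g)" using u by simp
  qed
  then show ?case by simp
next
  case (Suc D)
  obtain y where y: "adj y u" "d y = D" using d_pred[OF Suc.prems] by blast
  have t: "Gz u o' o' n \<le> Gz y o' o' n + mu o' / mu y * Gz u y y n" by (rule TRI)
  have ih: "Gz y o' o' n \<le> mu o' * (\<Sum>i<D. lam ^ i)" by (rule Suc.IH[OF y(2)])
  have nb: "Gz u y y n \<le> 1 / p y u" by (rule NB[OF y(1)])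
  have mp: "mu y * p y u = 1 / lam ^ D" using mu_p_adj[OF y(1)] y(2) Suc.prems by simp
  have pos: "0 < mu y" "0 < p y u" "0 < mu o'" using mu_pos p_pos[OF y(1)] by auto
  have "mu o' / mu y * Gz u y y n \<le> mu o' / mu y * (1 / p y u)"
    using nb pos by (intro mult_left_mono) auto
  also have "\<dots> = mu o' / (mu y * p y u)" by simp
  also have "\<dots> = mu o' * lam ^ D" using mp by simp
  finally have "Gz u o' o' n \<le> mu o' * (\<Sum>i<D. lam ^ i) + mu o' * lam ^ D" using t ih by linarith
  then show ?case by (simp add: distrib_left)
qed

end

context hs begin

lemma ESC_comb:
  assumes uo: "u \<noteq> o'"
  shows "1 + PS o' n (\<lambda>e. FR o' e \<and> u \<notin> set e) * Gz u o' o' N \<le> Gz u o' o' (n + N)"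
proof -
  define A where "A = {e\<in>wle o' n. FR o' e \<and> u \<notin> set e}"
  define B where "B = {b\<in>wle o' N. last b = o' \<and> u \<notin> set b}"
  define C where "C = {c\<in>wle o' (n + N). last c = o' \<and> u \<notin> set c}"
  define h where "h = (\<lambda>(a::'a list, b::'a list). butlast a @ b)"
  define I where "I = h ` Sigma A (\<lambda>_. B)"
  have fA: "finite A" unfolding A_def using fin_wle by simp
  have fB: "finite B" unfolding B_def using fin_wle by simp
  have fC: "finite C" unfolding C_def using fin_wle by simp
  have Aprop: "a \<in> wle o' n" "2 \<le> length a" "hd a = o'" "last a = o'" "u \<notin> set a" if "a \<in> A" for a
    using that unfolding A_def FR_def by auto
  have Bprop: "b \<in> wle o' N" "b \<noteq> []" "hd b = o'" "last b = o'" "u \<notin> set b" if "b \<in> B" for b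
    using that unfolding B_def wle_iff by auto
  have inj: "inj_on h (Sigma A (\<lambda>_. B))" unfolding h_def
  proof (rule KE_inj[where j="Suc 0"])
    show "\<And>a. a \<in> A \<Longrightarrow> KE (Suc 0) a" unfolding KE1 A_def by simp
    show "\<And>a b. a \<in> A \<Longrightarrow> b \<in> B \<Longrightarrow> b \<noteq> [] \<and> hd b = o'" using Bprop by blast
  qed
  have eq: "(\<Sum>a\<in>A. W a * (\<Sum>b\<in>B. W b)) = (\<Sum>c\<in>I. W c)"
    unfolding I_def h_def
  proof (rule CMB[OF fA])
    show "\<And>a. a \<in> A \<Longrightarrow> finite B" by (rule fB)
    show "inj_on (\<lambda>(a, b). butlast a @ b) (Sigma A (\<lambda>_. B))" using inj unfolding h_def .
    fix a b assume "a \<in> A" "b \<in> B"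
    then show "a \<noteq> [] \<and> b \<noteq> [] \<and> last a = hd b" using Aprop[of a] Bprop[of b] by auto
  qed
  have IC: "I \<subseteq> C - {[o']}"
  proof
    fix c assume "c \<in> I"
    then obtain a b where ab: "a \<in> A" "b \<in> B" "c = butlast a @ b" unfolding I_def h_def by auto
    have "c \<in> wle o' (n + N)" unfolding ab(3)
      by (rule wle_app) (use Aprop[OF ab(1)] Bprop[OF ab(2)] in auto)
    moreover have "last c = o'" using ab Bprop[OF ab(2)] by simp
    moreover have "u \<notin> set c" using ab Aprop[OF ab(1)] Bprop[OF ab(2)] in_set_butlastD by fastforce
    moreover have "c \<noteq> [o']"
    proof -
      have "length (butlast a) \<ge> 1" using Aprop[OF ab(1)] by simp
      then have "length c \<ge> 2" using ab(3) Bprop[OF ab(2)] by (cases b) auto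
      then show ?thesis by auto
    qed
    ultimately show "c \<in> C - {[o']}" unfolding C_def by simp
  qed
  have oC: "[o'] \<in> C" unfolding C_def using uo by (simp add: wle_iff)
  have fI: "finite I" using IC fC finite_subset by blast
  have "(\<Sum>c\<in>insert [o'] I. W c) \<le> (\<Sum>c\<in>C. W c)"
    by (rule sum_mono2[OF fC]) (use IC oC W_nonneg in auto)
  moreover have "(\<Sum>c\<in>insert [o'] I. W c) = 1 + (\<Sum>c\<in>I. W c)"
  proof -
    have "[o'] \<notin> I" using IC by blast
    then show ?thesis using fI by simp
  qed
  moreover have "(\<Sum>a\<in>A. W a * (\<Sum>b\<in>B. W b)) = PS o' n (\<lambda>e. FR o' e \<and> u \<notin> set e) * Gz u o' o' N"
    unfolding A_def B_def PS_def Gz_def by (simp only: sum_distrib_right[symmetric])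
  moreover have "(\<Sum>c\<in>C. W c) = Gz u o' o' (n + N)" unfolding C_def Gz_def PS_def by (rule refl)
  ultimately show ?thesis using eq by linarith
qed

lemma ESC: assumes "d u = D" "0 < D"
  shows "PS o' n (\<lambda>e. FR o' e \<and> u \<notin> set e) \<le> 1 - 1 / (mu o' * (\<Sum>i<D. lam ^ i))"
proof -
  define B0 where "B0 = mu o' * (\<Sum>i<D. lam ^ i)"
  define a where "a = PS o' n (\<lambda>e. FR o' e \<and> u \<notin> set e)"
  define G where "G N = Gz u o' o' N" for N
  have uo: "u \<noteq> o'" using assms d_o by auto
  have a0: "0 \<le> a" unfolding a_def by (rule PS_nonneg)
  have GB: "G N \<le> B0" for N unfolding G_def B0_def using Gbound[OF assms(1)] .
  have G0: "G 0 = 1" unfolding G_def Gz_def using uo by (simp add: PS_0)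
  have bdd: "bdd_above (range G)" using GB by (intro bdd_aboveI2[of _ _ B0]) auto
  define g where "g = (SUP N. G N)"
  have Gg: "G N \<le> g" for N unfolding g_def by (rule cSUP_upper[OF _ bdd]) simp
  have gB: "g \<le> B0" unfolding g_def by (rule cSUP_least) (auto intro: GB)
  have g1: "1 \<le> g" using Gg[of 0] G0 by simp
  have comb: "a * G N \<le> g - 1" for N
    using ESC_comb[OF uo, of n N] Gg[of "n + N"] unfolding a_def G_def by linarith
  have ag: "a * g \<le> g - 1"
  proof (cases "a = 0")
    case True then show ?thesis using g1 by simp
  next
    case False
    then have ap: "0 < a" using a0 by simp
    have "G N \<le> (g - 1) / a" for N using comb[of N] ap by (simp add: field_simps)
    then have "g \<le> (g - 1) / a" unfolding g_def by (intro cSUP_least) auto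
    then show ?thesis using ap by (simp add: field_simps)
  qed
  then have "a \<le> 1 - 1 / g" using g1 by (simp add: field_simps)
  also have "1 / g \<ge> 1 / B0" using gB g1 by (intro divide_left_mono) auto
  then have "1 - 1 / g \<le> 1 - 1 / B0" by simp
  finally show ?thesis unfolding a_def B0_def .
qed

end

context hs begin

definition "hh m q s i = 2 powr (m - real s) * (1 - q / 2) ^ i"
definition "gg m q s i = (if real s \<le> m then hh m q s i else 0)"

lemma hh_nonneg: "q \<le> 2 \<Longrightarrow> 0 \<le> hh m q s i" unfolding hh_def by simp
lemma gg_nonneg: "q \<le> 2 \<Longrightarrow> 0 \<le> gg m q s i" unfolding gg_def using hh_nonneg by simp
lemma hh_Suc: "hh m q (Suc s) i = hh m q s i / 2"
proof -
  have "m - real (Suc s) = (m - real s) - 1" by simp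
  then have "2 powr (m - real (Suc s)) = 2 powr ((m - real s) - 1)" by (simp only:)
  also have "\<dots> = 2 powr (m - real s) / 2 powr 1" by (rule powr_diff)
  finally have "2 powr (m - real (Suc s)) = 2 powr (m - real s) / 2" by simp
  then show ?thesis unfolding hh_def by simp
qed
lemma hh_anti: "s \<le> s' \<Longrightarrow> q \<le> 2 \<Longrightarrow> hh m q s' i \<le> hh m q s i"
  unfolding hh_def by (intro mult_right_mono) auto

lemma FR_sub: "PS x n (FR x) \<le> 1"
proof (cases n)
  case 0 then show ?thesis by (simp add: PS_0 FR_def)
next
  case (Suc n')
  have "PS w n' (\<lambda>ys. FR x (x # ys)) \<le> PS w n' (\<lambda>g. last g = x \<and> x \<notin> set (butlast g))" for w
  proof (rule PS_mono)
    fix g assume "g \<in> wle w n'" "FR x (x # g)"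
    then have "g \<noteq> []" "last (x # g) = x" "x \<notin> set (butlast (tl (x # g)))" unfolding FR_def wle_iff by auto
    then show "last g = x \<and> x \<notin> set (butlast g)" by simp
  qed
  then have "PS w n' (\<lambda>ys. FR x (x # ys)) \<le> 1" for w using HIT[of w n' x] by (meson order_trans)
  then have "(\<Sum>y\<in>nb x. p x y * PS y n' (\<lambda>ys. FR x (x # ys))) \<le> 1"
    by (intro sum_p_le PS_nonneg)
  moreover have "\<not> FR x [x]" by (simp add: FR_def)
  ultimately show ?thesis using Suc PS_Suc[of x n' "FR x"] by simp
qed

lemma OSB:
  assumes fR: "finite R" and oR: "o' \<in> R" and q: "0 \<le> q" "q \<le> 1"
    and esc: "real (card R) \<le> m \<Longrightarrow> PS o' n (\<lambda>e. FR o' e \<and> set e \<subseteq> R) \<le> 1 - q"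
  shows "(\<Sum>e\<in>{e\<in>wle o' n. FR o' e}. W e * gg m q (card (R \<union> set e)) i) \<le> gg m q (card R) (Suc i)"
proof (cases "real (card R) \<le> m")
  case False
  have "gg m q (card (R \<union> set e)) i = 0" for e
  proof -
    have "card R \<le> card (R \<union> set e)" using fR by (intro card_mono) auto
    then show ?thesis using False unfolding gg_def by auto
  qed
  then show ?thesis using False unfolding gg_def by simp
next
  case True
  define s where "s = card R"
  define E where "E = {e\<in>wle o' n. FR o' e}"
  define E1 where "E1 = {e\<in>E. set e \<subseteq> R}"
  define E2 where "E2 = {e\<in>E. \<not> set e \<subseteq> R}"
  have fE: "finite E" unfolding E_def using fin_wle by simp
  have q2: "q \<le> 2" using q by simp
  let ?h0 = "hh m q s i" and ?h1 = "hh m q (Suc s) i"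
  have spl: "(\<Sum>e\<in>E. W e * gg m q (card (R \<union> set e)) i) =
     (\<Sum>e\<in>E1. W e * gg m q (card (R \<union> set e)) i) + (\<Sum>e\<in>E2. W e * gg m q (card (R \<union> set e)) i)"
  proof -
    have "E = E1 \<union> E2" "E1 \<inter> E2 = {}" unfolding E1_def E2_def by auto
    moreover have "finite E1" "finite E2" using fE unfolding E1_def E2_def by auto
    ultimately show ?thesis by (simp add: sum.union_disjoint)
  qed
  have s1: "(\<Sum>e\<in>E1. W e * gg m q (card (R \<union> set e)) i) \<le> (\<Sum>e\<in>E1. W e) * ?h0"
  proof -
    have "(\<Sum>e\<in>E1. W e * gg m q (card (R \<union> set e)) i) \<le> (\<Sum>e\<in>E1. W e * ?h0)"
    proof (rule sum_mono)
      fix e assume "e \<in> E1"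
      then have "R \<union> set e = R" unfolding E1_def by auto
      then have "gg m q (card (R \<union> set e)) i \<le> ?h0" unfolding gg_def s_def using hh_nonneg[OF q2] by simp
      then show "W e * gg m q (card (R \<union> set e)) i \<le> W e * ?h0" by (intro mult_left_mono W_nonneg)
    qed
    then show ?thesis by (simp add: sum_distrib_right)
  qed
  have s2: "(\<Sum>e\<in>E2. W e * gg m q (card (R \<union> set e)) i) \<le> (\<Sum>e\<in>E2. W e) * ?h1"
  proof -
    have "(\<Sum>e\<in>E2. W e * gg m q (card (R \<union> set e)) i) \<le> (\<Sum>e\<in>E2. W e * ?h1)"
    proof (rule sum_mono)
      fix e assume "e \<in> E2"
      then have "R \<subset> R \<union> set e" unfolding E2_def by auto
      then have "card R < card (R \<union> set e)" using fR by (intro psubset_card_mono) auto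
      then have "Suc s \<le> card (R \<union> set e)" unfolding s_def by simp
      then have "gg m q (card (R \<union> set e)) i \<le> ?h1" unfolding gg_def using hh_anti[OF _ q2] hh_nonneg[OF q2] by auto
      then show "W e * gg m q (card (R \<union> set e)) i \<le> W e * ?h1" by (intro mult_left_mono W_nonneg)
    qed
    then show ?thesis by (simp add: sum_distrib_right)
  qed
  define a where "a = (\<Sum>e\<in>E1. W e)"
  define b where "b = (\<Sum>e\<in>E2. W e)"
  have a_eq: "a = PS o' n (\<lambda>e. FR o' e \<and> set e \<subseteq> R)" unfolding a_def E1_def E_def PS_def
    by (rule sum.cong) auto
  have ab: "a + b \<le> 1"
  proof -
    have "a + b = PS o' n (FR o')" unfolding a_def b_def PS_def E1_def E2_def E_def
      by (subst sum.union_disjoint[symmetric]) (auto intro: finite_subset[OF _ fin_wle] intro!: sum.cong)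
    then show ?thesis using FR_sub by simp
  qed
  have aq: "a \<le> 1 - q" using esc True unfolding a_eq by simp
  have b0: "0 \<le> b" unfolding b_def by (intro sum_nonneg W_nonneg)
  have a0: "0 \<le> a" unfolding a_def by (intro sum_nonneg W_nonneg)
  have h10: "?h1 = ?h0 / 2" by (rule hh_Suc)
  have h0: "0 \<le> ?h0" by (rule hh_nonneg[OF q2])
  have "a * ?h0 + b * ?h1 \<le> a * ?h0 + (1 - a) * ?h1" using ab h10 h0 by (intro add_left_mono mult_right_mono) auto
  also have "\<dots> = ?h1 + a * (?h0 - ?h1)" by (simp add: algebra_simps)
  also have "\<dots> \<le> ?h1 + (1 - q) * (?h0 - ?h1)" using aq h10 h0 by (intro add_left_mono mult_right_mono) auto
  also have "\<dots> = ?h0 * (1 - q / 2)" using h10 by (simp add: algebra_simps)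
  also have "\<dots> = gg m q (card R) (Suc i)" unfolding gg_def hh_def s_def using True by simp
  finally have fin: "a * ?h0 + b * ?h1 \<le> gg m q (card R) (Suc i)" .
  show ?thesis using spl s1 s2 fin unfolding E_def[symmetric] a_def b_def by linarith
qed

end

context hs begin

definition "KEset j n = {g\<in>wle o' n. KE j g}"

lemma split_at: assumes "r \<noteq> []" "e \<noteq> []" "last r = hd e" "g = butlast r @ e"
  shows "length r - 1 < length g" "take (Suc (length r - 1)) g = r" "drop (length r - 1) g = e"
proof -
  show "length r - 1 < length g" using assms by simp
  have t1: "take (Suc (length r - 1)) g = butlast r @ take 1 e"
  proof -
    have "Suc (length r - 1) - length (butlast r) = Suc 0" using assms(1) by (cases r) auto
    then show ?thesis unfolding assms(4) by (simp only: take_append) simp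
  qed
  have t2: "take 1 e = [last r]" using assms by (cases e) auto
  show "take (Suc (length r - 1)) g = r" unfolding t1 t2 using assms(1) by simp
  show "drop (length r - 1) g = e" using assms by simp
qed

lemma set_butlast_app: assumes "r \<noteq> []" "e \<noteq> []" "last r = hd e"
  shows "set (butlast r @ e) = set r \<union> set e"
proof -
  have "set r = set (butlast r) \<union> {last r}" using assms(1) by (metis append_butlast_last_id set_append empty_set list.simps(15) Un_insert_right sup_bot.right_neutral)
  moreover have "last r \<in> set e" using assms(2,3) by simp
  ultimately show ?thesis by auto
qed

lemma SM:
  assumes q: "0 \<le> q" "q \<le> 1"
    and esc: "\<And>R. finite R \<Longrightarrow> o' \<in> R \<Longrightarrow> real (card R) \<le> m \<Longrightarrow> PS o' n (\<lambda>e. FR o' e \<and> set e \<subseteq> R) \<le> 1 - q"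
  shows "(\<Sum>g\<in>KEset (Suc j) n. W g * gg m q (card (set g)) i) \<le> (\<Sum>r\<in>KEset j n. W r * gg m q (card (set r)) (Suc i))"
proof -
  define E where "E = {e\<in>wle o' n. FR o' e}"
  have q2: "q \<le> 2" using q by simp
  have "(\<Sum>g\<in>KEset (Suc j) n. W g * gg m q (card (set g)) i) \<le>
      (\<Sum>r\<in>KEset j n. W r * (\<Sum>e\<in>E. W e * gg m q (card (set (butlast r @ e))) i))"
  proof (rule SPL[where B="\<lambda>_. E"])
    show "finite (KEset (Suc j) n)" "finite (KEset j n)" unfolding KEset_def using fin_wle by auto
    show "\<And>a. a \<in> KEset j n \<Longrightarrow> finite E" unfolding E_def using fin_wle by auto
    show "\<And>g. 0 \<le> gg m q (card (set g)) i" using gg_nonneg[OF q2] .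
    fix g assume "g \<in> KEset (Suc j) n"
    then have gw: "g \<in> wle o' n" and kg: "KE (Suc j) g" unfolding KEset_def by auto
    from kg obtain r e where re: "KE j r" "FR o' e" "g = butlast r @ e" by auto
    have rp: "r \<noteq> []" "hd r = o'" "last r = o'" using KE_props[OF re(1)] by auto
    have ep: "e \<noteq> []" "hd e = o'" using re(2) unfolding FR_def by auto
    note sa = split_at[OF rp(1) ep(1) _ re(3)]
    have lr: "last r = hd e" using rp ep by simp
    have "take (Suc (length r - 1)) g \<in> KEset j n" unfolding KEset_def
      using wle_take[OF gw, of "Suc (length r - 1)"] sa(2)[OF lr] re(1) by simp
    moreover have "drop (length r - 1) g \<in> E" unfolding E_def
    proof -
      have "g ! (length r - 1) = o'"
      proof -
        have "g ! (length r - 1) = drop (length r - 1) g ! 0" using sa(1)[OF lr] by simp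
        then show ?thesis using sa(3)[OF lr] ep by (simp add: hd_conv_nth)
      qed
      then have "drop (length r - 1) g \<in> wle o' n" using wle_drop[OF gw sa(1)[OF lr]] by simp
      then show "drop (length r - 1) g \<in> {e \<in> wle o' n. FR o' e}" using sa(3)[OF lr] re(2) by simp
    qed
    ultimately show "\<exists>i<length g. take (Suc i) g \<in> KEset j n \<and> drop i g \<in> E"
      using sa(1)[OF lr] by (intro exI[of _ "length r - 1"] conjI)
  qed
  also have "\<dots> \<le> (\<Sum>r\<in>KEset j n. W r * gg m q (card (set r)) (Suc i))"
  proof (rule sum_mono)
    fix r assume "r \<in> KEset j n"
    then have kr: "KE j r" unfolding KEset_def by auto
    have rp: "r \<noteq> []" "hd r = o'" "last r = o'" using KE_props[OF kr] by auto
    have "(\<Sum>e\<in>E. W e * gg m q (card (set (butlast r @ e))) i) = (\<Sum>e\<in>E. W e * gg m q (card (set r \<union> set e)) i)"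
    proof (rule sum.cong[OF refl])
      fix e assume "e \<in> E"
      then have "e \<noteq> []" "hd e = o'" unfolding E_def FR_def by auto
      then show "W e * gg m q (card (set (butlast r @ e))) i = W e * gg m q (card (set r \<union> set e)) i"
        using set_butlast_app[of r e] rp by simp
    qed
    also have "\<dots> \<le> gg m q (card (set r)) (Suc i)" unfolding E_def
    proof (rule OSB[OF _ _ q])
      show "finite (set r)" by simp
      show "o' \<in> set r" using rp hd_in_set by metis
      show "real (card (set r)) \<le> m \<Longrightarrow> PS o' n (\<lambda>e. FR o' e \<and> set e \<subseteq> set r) \<le> 1 - q"
        by (rule esc) (simp_all add: \<open>o' \<in> set r\<close>)
    qed
    finally show "W r * (\<Sum>e\<in>E. W e * gg m q (card (set (butlast r @ e))) i) \<le> W r * gg m q (card (set r)) (Suc i)"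
      by (intro mult_left_mono W_nonneg)
  qed
  finally show ?thesis .
qed

lemma CHAIN:
  assumes q: "0 \<le> q" "q \<le> 1"
    and esc: "\<And>R. finite R \<Longrightarrow> o' \<in> R \<Longrightarrow> real (card R) \<le> m \<Longrightarrow> PS o' n (\<lambda>e. FR o' e \<and> set e \<subseteq> R) \<le> 1 - q"
  shows "j \<le> k \<Longrightarrow> (\<Sum>g\<in>KEset j n. W g * gg m q (card (set g)) (k - j)) \<le> gg m q 1 k"
proof (induction j)
  case 0
  have "KEset 0 n = {[o']}" unfolding KEset_def by (auto simp: wle_iff)
  then show ?case by simp
next
  case (Suc j)
  have e: "Suc (k - Suc j) = k - j" using Suc.prems by simp
  have "(\<Sum>g\<in>KEset (Suc j) n. W g * gg m q (card (set g)) (k - Suc j)) \<le>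
        (\<Sum>r\<in>KEset j n. W r * gg m q (card (set r)) (Suc (k - Suc j)))" by (rule SM[OF q esc])
  also have "\<dots> \<le> gg m q 1 k" unfolding e using Suc.IH Suc.prems by simp
  finally show ?case .
qed

lemma FINAL_SUM:
  assumes q: "0 \<le> q" "q \<le> 1"
    and esc: "\<And>R. finite R \<Longrightarrow> o' \<in> R \<Longrightarrow> real (card R) \<le> m \<Longrightarrow> PS o' n (\<lambda>e. FR o' e \<and> set e \<subseteq> R) \<le> 1 - q"
  shows "(\<Sum>g\<in>{g\<in>KEset k n. real (card (set g)) \<le> m}. W g) \<le> gg m q 1 k"
proof -
  have q2: "q \<le> 2" using q by simp
  have fK: "finite (KEset k n)" unfolding KEset_def using fin_wle by simp
  have "(\<Sum>g\<in>{g\<in>KEset k n. real (card (set g)) \<le> m}. W g) \<le> (\<Sum>g\<in>{g\<in>KEset k n. real (card (set g)) \<le> m}. W g * gg m q (card (set g)) (k - k))"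
  proof (rule sum_mono)
    fix g assume "g \<in> {g\<in>KEset k n. real (card (set g)) \<le> m}"
    then have c: "real (card (set g)) \<le> m" by simp
    then have "1 \<le> 2 powr (m - real (card (set g)))" by (intro ge_one_powr_ge_zero) auto
    then have "1 \<le> gg m q (card (set g)) 0" unfolding gg_def hh_def using c by simp
    then show "W g \<le> W g * gg m q (card (set g)) (k - k)" using W_nonneg[of g] by (simp add: mult_le_cancel_left1)
  qed
  also have "\<dots> \<le> (\<Sum>g\<in>KEset k n. W g * gg m q (card (set g)) (k - k))"
    by (rule sum_mono2[OF fK]) (auto intro!: mult_nonneg_nonneg W_nonneg gg_nonneg[OF q2])
  also have "\<dots> \<le> gg m q 1 k" using CHAIN[OF q esc, where j=k and k=k] by simp
  finally show ?thesis .
qed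

end

locale hsw = hs adj o' lam for adj :: "'a \<Rightarrow> 'a \<Rightarrow> bool" and o' lam +
  fixes M :: "'w measure" and Z :: "nat \<Rightarrow> 'w \<Rightarrow> 'a"
  assumes walk: "is_homesick_walk M adj o' lam Z"
begin

lemma PS_M: "prob_space M" using walk unfolding is_homesick_walk_def by simp

sublocale P: prob_space M by (rule PS_M)

lemma Zmeas: "Z i \<in> measurable M (count_space UNIV)"
  using walk unfolding is_homesick_walk_def by simp

lemma fdd: "measure M {\<omega>\<in>space M. \<forall>i\<le>n. Z i \<omega> = f i} = (if f 0 = o' then (\<Prod>i<n. p (f i) (f (Suc i))) else 0)"
  using walk unfolding is_homesick_walk_def p_def by simp

definition "cyl g = {\<omega>\<in>space M. \<forall>i<length g. Z i \<omega> = g ! i}"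

lemma cyl_sets: "cyl g \<in> sets M"
proof -
  have "cyl g = {\<omega>\<in>space M. \<forall>i\<in>{..<length g}. Z i \<omega> = g ! i}" unfolding cyl_def by auto
  also have "\<dots> \<in> sets M"
  proof (rule sets.sets_Collect_finite_All)
    fix i
    have "{\<omega>\<in>space M. Z i \<omega> = g ! i} = Z i -` {g ! i} \<inter> space M" by auto
    also have "\<dots> \<in> sets M" by (rule measurable_sets[OF Zmeas]) simp
    finally show "{\<omega>\<in>space M. Z i \<omega> = g ! i} \<in> sets M" .
  qed simp
  finally show ?thesis .
qed

lemma W_prod: "g \<noteq> [] \<Longrightarrow> W g = (\<Prod>i<length g - 1. p (g ! i) (g ! Suc i))"
proof (induction g rule: W.induct)
  case (3 x y ys)
  have "W (x # y # ys) = p x y * W (y # ys)" by simp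
  also have "W (y # ys) = (\<Prod>i<length (y # ys) - 1. p ((y # ys) ! i) ((y # ys) ! Suc i))" using 3 by simp
  finally show ?case by (simp add: prod.lessThan_Suc_shift del: prod.lessThan_Suc)
qed auto

lemma cyl_meas: assumes "g \<noteq> []" "hd g = o'" shows "measure M (cyl g) = W g"
proof -
  have "cyl g = {\<omega>\<in>space M. \<forall>i\<le>length g - 1. Z i \<omega> = (\<lambda>i. g ! i) i}"
    unfolding cyl_def using assms(1) by (cases g) (auto simp: less_Suc_eq_le)
  then have "measure M (cyl g) = (if g ! 0 = o' then (\<Prod>i<length g - 1. p (g ! i) (g ! Suc i)) else 0)"
    using fdd by simp
  also have "g ! 0 = o'" using assms by (simp add: hd_conv_nth)
  finally show ?thesis using W_prod[OF assms(1)] by simp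
qed

lemma cyl_eq: assumes "\<omega> \<in> cyl g" "\<omega> \<in> cyl g'" "length g = length g'" shows "g = g'"
proof (rule nth_equalityI)
  show "length g = length g'" by fact
  fix i assume "i < length g"
  then show "g ! i = g' ! i" using assms unfolding cyl_def by auto
qed

lemma cyl_RT: assumes "KE k g" "\<omega> \<in> cyl g" shows "return_time (\<lambda>i. Z i \<omega>) o' k = length g - 1"
  by (rule RT[OF assms(1)]) (use assms(2) in \<open>auto simp: cyl_def\<close>)

lemma cyl_KE_eq: assumes "KE k g" "KE k g'" "\<omega> \<in> cyl g" "\<omega> \<in> cyl g'" shows "g = g'"
proof -
  have "length g - 1 = length g' - 1" using cyl_RT[OF assms(1,3)] cyl_RT[OF assms(2,4)] by simp
  moreover have "g \<noteq> []" "g' \<noteq> []" using KE_props assms(1,2) by auto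
  ultimately have "length g = length g'" by (cases g; cases g') auto
  then show ?thesis using cyl_eq assms(3,4) by blast
qed

lemma meas_union:
  assumes fS: "finite S" and hdS: "\<And>g. g \<in> S \<Longrightarrow> g \<noteq> [] \<and> hd g = o'"
    and dj: "\<And>g g' \<omega>. g \<in> S \<Longrightarrow> g' \<in> S \<Longrightarrow> \<omega> \<in> cyl g \<Longrightarrow> \<omega> \<in> cyl g' \<Longrightarrow> g = g'"
  shows "measure M (\<Union>g\<in>S. cyl g) = (\<Sum>g\<in>S. W g)"
proof -
  have "measure M (\<Union>g\<in>S. cyl g) = (\<Sum>g\<in>S. measure M (cyl g))"
  proof (rule P.finite_measure_finite_Union[OF fS])
    show "cyl ` S \<subseteq> sets M" using cyl_sets by blast
    show "disjoint_family_on cyl S" unfolding disjoint_family_on_def using dj by blast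
  qed
  also have "\<dots> = (\<Sum>g\<in>S. W g)" by (rule sum.cong[OF refl]) (use hdS cyl_meas in blast)
  finally show ?thesis .
qed

lemma walk_AE: "AE \<omega> in M. \<forall>m. \<omega> \<in> (\<Union>g\<in>wk o' m. cyl g)"
proof (rule AE_all_countable[THEN iffD2], rule allI)
  fix m
  have "measure M (\<Union>g\<in>wk o' m. cyl g) = (\<Sum>g\<in>wk o' m. W g)"
  proof (rule meas_union)
    show "finite (wk o' m)" by (rule fin_wk)
    show "\<And>g. g \<in> wk o' m \<Longrightarrow> g \<noteq> [] \<and> hd g = o'" by (auto simp: wk_iff)
    show "\<And>g g' \<omega>. g \<in> wk o' m \<Longrightarrow> g' \<in> wk o' m \<Longrightarrow> \<omega> \<in> cyl g \<Longrightarrow> \<omega> \<in> cyl g' \<Longrightarrow> g = g'"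
      using cyl_eq by (auto simp: wk_iff)
  qed
  also have "\<dots> = 1" using STOCH[of o' m] unfolding PS_def wk_eq by simp
  finally show "AE \<omega> in M. \<omega> \<in> (\<Union>g\<in>wk o' m. cyl g)" by (rule P.AE_prob_1)
qed

lemma KEset1: "KEset (Suc 0) n = {g\<in>wle o' n. FR o' g}" unfolding KEset_def KE1 ..

lemma KEset_mono: "n \<le> n' \<Longrightarrow> KEset j n \<subseteq> KEset j n'"
  unfolding KEset_def using wle_mono by blast

lemma fin_KEset: "finite (KEset j n)" unfolding KEset_def using fin_wle by simp

lemma meas_KE: "S \<subseteq> KEset j n \<Longrightarrow> measure M (\<Union>g\<in>S. cyl g) = (\<Sum>g\<in>S. W g)"
proof (rule meas_union)
  assume S: "S \<subseteq> KEset j n"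
  then show "finite S" using fin_KEset finite_subset by blast
  show "\<And>g. g \<in> S \<Longrightarrow> g \<noteq> [] \<and> hd g = o'" using S KE_props unfolding KEset_def by blast
  show "\<And>g g' \<omega>. g \<in> S \<Longrightarrow> g' \<in> S \<Longrightarrow> \<omega> \<in> cyl g \<Longrightarrow> \<omega> \<in> cyl g' \<Longrightarrow> g = g'"
    using S cyl_KE_eq unfolding KEset_def by blast
qed

lemma sets_UN_cyl: "finite S \<Longrightarrow> (\<Union>g\<in>S. cyl g) \<in> sets M"
  using cyl_sets by (intro sets.finite_UN) auto

lemma FR_lim: assumes rec: "AE \<omega> in M. \<exists>n>0. Z n \<omega> = o'"
  shows "(\<lambda>n. PS o' n (FR o')) \<longlonglongrightarrow> 1"
proof -
  define V where "V n = (\<Union>g\<in>KEset (Suc 0) n. cyl g)" for n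
  have mV: "measure M (V n) = PS o' n (FR o')" for n
    unfolding V_def using meas_KE[of "KEset (Suc 0) n" "Suc 0" n] unfolding KEset1 PS_def by simp
  have Vs: "range V \<subseteq> sets M" unfolding V_def using sets_UN_cyl fin_KEset by blast
  have inc: "incseq V" unfolding V_def incseq_def using KEset_mono by blast
  have AE: "AE \<omega> in M. \<omega> \<in> (\<Union>n. V n)"
    using rec walk_AE
  proof eventually_elim
    case (elim \<omega>)
    define m where "m = (LEAST n. 0 < n \<and> Z n \<omega> = o')"
    have mm: "0 < m \<and> Z m \<omega> = o'" unfolding m_def using elim(1) by (rule LeastI_ex)
    have mmin: "\<not> (0 < j \<and> Z j \<omega> = o')" if jm: "j < m" for j using jm unfolding m_def by (rule not_less_Least)
    obtain g where g: "g \<in> wk o' m" "\<omega> \<in> cyl g" using elim(2) by blast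
    have gp: "length g = Suc m" "hd g = o'" "successively adj g" using g(1) unfolding wk_iff by auto
    have gz: "g ! i = Z i \<omega>" if "i < length g" for i using g(2) that unfolding cyl_def by auto
    have "FR o' g" unfolding FR_def
    proof (intro conjI)
      show "2 \<le> length g" using gp mm by simp
      show "hd g = o'" by (rule gp(2))
      have "g \<noteq> []" using gp by auto
      then have "last g = g ! m" using gp(1) by (simp add: last_conv_nth)
      then show "last g = o'" using gz[of m] gp(1) mm by simp
      show "o' \<notin> set (butlast (tl g))"
      proof
        assume "o' \<in> set (butlast (tl g))"
        then obtain j where j: "j < length (butlast (tl g))" "butlast (tl g) ! j = o'" by (auto simp: in_set_conv_nth)
        have "butlast (tl g) ! j = g ! Suc j" using j(1) by (simp add: nth_butlast nth_tl)
        then have "Z (Suc j) \<omega> = o'" using gz[of "Suc j"] j gp(1) by simp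
        moreover have "Suc j < m" using j(1) gp(1) by simp
        ultimately show False using mmin[of "Suc j"] by simp
      qed
    qed
    moreover have "g \<in> wle o' m" using g(1) unfolding wle_def by blast
    ultimately have "g \<in> KEset (Suc 0) m" unfolding KEset1 by simp
    then show "\<omega> \<in> (\<Union>n. V n)" unfolding V_def using g(2) by blast
  qed
  have "(\<Union>n. V n) \<in> sets M" using Vs by (intro sets.countable_UN) auto
  then have "measure M (\<Union>n. V n) = 1" using AE P.AE_in_set_eq_1[of "\<Union>n. V n"] by simp
  then have "(\<lambda>n. measure M (V n)) \<longlonglongrightarrow> 1" using P.finite_Lim_measure_incseq[OF Vs inc] by simp
  then show ?thesis unfolding mV .
qed

lemma KE_comb: "(\<Sum>g\<in>KEset j a. W g) * PS o' b (FR o') \<le> (\<Sum>g\<in>KEset (Suc j) (a + b). W g)"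
proof -
  define A where "A = KEset j a"
  define B where "B = {e\<in>wle o' b. FR o' e}"
  define I where "I = (\<lambda>(r, e). butlast r @ e) ` Sigma A (\<lambda>_. B)"
  have fA: "finite A" unfolding A_def by (rule fin_KEset)
  have fB: "finite B" unfolding B_def using fin_wle by simp
  have Ap: "r \<in> wle o' a" "KE j r" "r \<noteq> []" "last r = o'" if "r \<in> A" for r
    using that KE_props unfolding A_def KEset_def by auto
  have Bp: "e \<in> wle o' b" "FR o' e" "e \<noteq> []" "hd e = o'" if "e \<in> B" for e
    using that unfolding B_def FR_def by auto
  have eq: "(\<Sum>r\<in>A. W r * (\<Sum>e\<in>B. W e)) = (\<Sum>c\<in>I. W c)" unfolding I_def
  proof (rule CMB[OF fA])
    show "\<And>a. a \<in> A \<Longrightarrow> finite B" by (rule fB)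
    show "inj_on (\<lambda>(a, b). butlast a @ b) (Sigma A (\<lambda>_. B))"
      by (rule KE_inj[where j=j]) (use Ap Bp in blast)+
    fix r e assume "r \<in> A" "e \<in> B"
    then show "r \<noteq> [] \<and> e \<noteq> [] \<and> last r = hd e" using Ap Bp by simp
  qed
  have IK: "I \<subseteq> KEset (Suc j) (a + b)"
  proof
    fix c assume "c \<in> I"
    then obtain r e where re: "r \<in> A" "e \<in> B" "c = butlast r @ e" unfolding I_def by auto
    have "c \<in> wle o' (a + b)" unfolding re(3) by (rule wle_app) (use Ap[OF re(1)] Bp[OF re(2)] in auto)
    moreover have "KE (Suc j) c" using re Ap[OF re(1)] Bp[OF re(2)] by auto
    ultimately show "c \<in> KEset (Suc j) (a + b)" unfolding KEset_def by simp
  qed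
  have "(\<Sum>c\<in>I. W c) \<le> (\<Sum>g\<in>KEset (Suc j) (a + b). W g)"
    by (rule sum_mono2[OF fin_KEset IK]) (rule W_nonneg)
  moreover have "(\<Sum>r\<in>A. W r * (\<Sum>e\<in>B. W e)) = (\<Sum>g\<in>KEset j a. W g) * PS o' b (FR o')"
    unfolding A_def B_def PS_def by (simp only: sum_distrib_right[symmetric])
  ultimately show ?thesis using eq by simp
qed

lemma KE_tot: assumes rec: "AE \<omega> in M. \<exists>n>0. Z n \<omega> = o'"
  shows "0 < \<epsilon> \<Longrightarrow> \<exists>n. 1 - \<epsilon> \<le> (\<Sum>g\<in>KEset j n. W g)"
proof (induction j arbitrary: \<epsilon>)
  case 0
  have "KEset 0 0 = {[o']}" unfolding KEset_def by (auto simp: wle_iff)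
  then show ?case using 0 by (intro exI[of _ 0]) simp
next
  case (Suc j)
  define \<delta> where "\<delta> = min (\<epsilon> / 2) (1 / 2)"
  have dp: "0 < \<delta>" "\<delta> \<le> 1 / 2" "2 * \<delta> \<le> \<epsilon>" unfolding \<delta>_def using Suc.prems by auto
  obtain a where a: "1 - \<delta> \<le> (\<Sum>g\<in>KEset j a. W g)" using Suc.IH[OF dp(1)] by blast
  have "1 - \<delta> < 1" using dp by simp
  then have "eventually (\<lambda>n. 1 - \<delta> < PS o' n (FR o')) sequentially"
    by (rule order_tendstoD(1)[OF FR_lim[OF rec]])
  then obtain b where b: "1 - \<delta> < PS o' b (FR o')" using eventually_sequentially by auto
  have "(1 - \<delta>) * (1 - \<delta>) \<le> (\<Sum>g\<in>KEset j a. W g) * PS o' b (FR o')"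
    using a b dp by (intro mult_mono) auto
  also have "\<dots> \<le> (\<Sum>g\<in>KEset (Suc j) (a + b). W g)" by (rule KE_comb)
  finally have "(1 - \<delta>) * (1 - \<delta>) \<le> (\<Sum>g\<in>KEset (Suc j) (a + b). W g)" .
  moreover have "1 - \<epsilon> \<le> (1 - \<delta>) * (1 - \<delta>)" using dp by (simp add: algebra_simps) (smt (verit) mult_nonneg_nonneg dp(1))
  ultimately show ?case by (intro exI[of _ "a + b"]) linarith
qed

lemma KE_AE: assumes rec: "AE \<omega> in M. \<exists>n>0. Z n \<omega> = o'"
  shows "AE \<omega> in M. \<omega> \<in> (\<Union>n. \<Union>g\<in>KEset k n. cyl g)"
proof -
  define Y where "Y = (\<Union>n. \<Union>g\<in>KEset k n. cyl g)"
  have Ys: "Y \<in> sets M" unfolding Y_def using sets_UN_cyl fin_KEset by (intro sets.countable_UN) auto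
  have ge: "1 - \<epsilon> \<le> measure M Y" if eps: "0 < \<epsilon>" for \<epsilon>
  proof -
    obtain n where n: "1 - \<epsilon> \<le> (\<Sum>g\<in>KEset k n. W g)" using KE_tot[OF rec eps] by blast
    have "(\<Sum>g\<in>KEset k n. W g) = measure M (\<Union>g\<in>KEset k n. cyl g)" using meas_KE[of "KEset k n" k n] by simp
    also have "\<dots> \<le> measure M Y" unfolding Y_def
      by (rule P.finite_measure_mono) (use Ys[unfolded Y_def] in auto)
    finally show ?thesis using n by simp
  qed
  have "measure M Y = 1"
  proof (rule antisym)
    show "measure M Y \<le> 1" by simp
    show "1 \<le> measure M Y"
    proof (rule ccontr)
      assume "\<not> 1 \<le> measure M Y"
      then have "0 < (1 - measure M Y) / 2" by simp
      from ge[OF this] have "1 - (1 - measure M Y) / 2 \<le> measure M Y" .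
      then have "1 \<le> measure M Y" by (simp add: field_simps)
      then show False using \<open>\<not> 1 \<le> measure M Y\<close> by simp
    qed
  qed
  then show ?thesis unfolding Y_def by (rule P.AE_prob_1)
qed

end

context hsw begin

lemma MAIN_BOUND:
  assumes rec: "AE \<omega> in M. \<exists>n>0. Z n \<omega> = o'"
    and q: "0 \<le> q" "q \<le> 1"
    and esc: "\<And>n R. finite R \<Longrightarrow> o' \<in> R \<Longrightarrow> real (card R) \<le> m \<Longrightarrow> PS o' n (\<lambda>e. FR o' e \<and> set e \<subseteq> R) \<le> 1 - q"
  shows "measure M {\<omega> \<in> space M. real (card ((\<lambda>i. Z i \<omega>) ` {0..return_time (\<lambda>i. Z i \<omega>) o' k})) \<le> m}
         \<le> gg m q 1 k"
proof -
  define S where "S n = {g\<in>KEset k n. real (card (set g)) \<le> m}" for n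
  define U where "U n = (\<Union>g\<in>S n. cyl g)" for n
  have fS: "finite (S n)" for n unfolding S_def using fin_KEset by simp
  have Us: "range U \<subseteq> sets M" unfolding U_def using sets_UN_cyl fS by blast
  have inc: "incseq U" unfolding U_def S_def incseq_def using KEset_mono by blast
  have mU: "measure M (U n) \<le> gg m q 1 k" for n
  proof -
    have "measure M (U n) = (\<Sum>g\<in>S n. W g)" unfolding U_def by (rule meas_KE) (auto simp: S_def)
    also have "\<dots> \<le> gg m q 1 k" unfolding S_def by (rule FINAL_SUM[OF q esc])
    finally show ?thesis .
  qed
  have lim: "(\<lambda>n. measure M (U n)) \<longlonglongrightarrow> measure M (\<Union>n. U n)" by (rule P.finite_Lim_measure_incseq[OF Us inc])
  have mUU: "measure M (\<Union>n. U n) \<le> gg m q 1 k"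
    using lim mU by (intro LIMSEQ_le_const2) auto
  have AE: "AE \<omega> in M. \<omega> \<in> {\<omega> \<in> space M. real (card ((\<lambda>i. Z i \<omega>) ` {0..return_time (\<lambda>i. Z i \<omega>) o' k})) \<le> m} \<longrightarrow> \<omega> \<in> (\<Union>n. U n)"
    using KE_AE[OF rec, of k]
  proof eventually_elim
    case (elim \<omega>)
    show ?case
    proof
      assume E: "\<omega> \<in> {\<omega> \<in> space M. real (card ((\<lambda>i. Z i \<omega>) ` {0..return_time (\<lambda>i. Z i \<omega>) o' k})) \<le> m}"
      from elim obtain n g where g: "g \<in> KEset k n" "\<omega> \<in> cyl g" by blast
      have kg: "KE k g" using g(1) unfolding KEset_def by simp
      have gne: "g \<noteq> []" using KE_props[OF kg] by simp
      have rt: "return_time (\<lambda>i. Z i \<omega>) o' k = length g - 1" by (rule cyl_RT[OF kg g(2)])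
      have "(\<lambda>i. Z i \<omega>) ` {0..length g - 1} = (\<lambda>i. g ! i) ` {0..<length g}"
      proof (rule image_cong)
        show "{0..length g - 1} = {0..<length g}" using gne by (cases g) auto
        fix i assume "i \<in> {0..<length g}"
        then show "Z i \<omega> = g ! i" using g(2) unfolding cyl_def by auto
      qed
      also have "\<dots> = set g" by (auto simp: set_conv_nth)
      finally have "real (card (set g)) \<le> m" using E rt by simp
      then have "g \<in> S n" unfolding S_def using g(1) by simp
      then show "\<omega> \<in> (\<Union>n. U n)" unfolding U_def using g(2) by blast
    qed
  qed
  have "(\<Union>n. U n) \<in> sets M" using Us by (intro sets.countable_UN) auto
  then have "measure M {\<omega> \<in> space M. real (card ((\<lambda>i. Z i \<omega>) ` {0..return_time (\<lambda>i. Z i \<omega>) o' k})) \<le> m} \<le> measure M (\<Union>n. U n)"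
    by (rule P.finite_measure_mono_AE[OF AE])
  then show ?thesis using mUU by linarith
qed

end

context hs begin

lemma final_arith:
  fixes N k :: nat and q :: real
  assumes q: "0 \<le> q" "q \<le> 1" and Nk: "real N \<le> real k * q"
  shows "gg (real N / 4) q 1 k \<le> exp (- real N / 8)"
proof (cases "real 1 \<le> real N / 4")
  case False then show ?thesis unfolding gg_def by simp
next
  case True
  have b0: "0 \<le> 1 - q / 2" using q by simp
  have "(1 - q / 2) ^ k \<le> exp (- (q / 2)) ^ k"
    using b0 exp_ge_add_one_self[of "- (q / 2)"] by (intro power_mono) auto
  also have "\<dots> = exp (- (real k * q / 2))" using exp_of_nat_mult[of k "- (q / 2)"] by simp
  also have "\<dots> \<le> exp (- (real N / 2))" using Nk by simp
  finally have e1: "(1 - q / 2) ^ k \<le> exp (- (real N / 2))" .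
  have e2: "2 powr (real N / 4 - real 1) = exp ((real N / 4 - 1) * ln 2)" by (simp add: powr_def)
  have "gg (real N / 4) q 1 k = 2 powr (real N / 4 - real 1) * (1 - q / 2) ^ k"
    unfolding gg_def hh_def using True by simp
  also have "\<dots> \<le> exp ((real N / 4 - 1) * ln 2) * exp (- (real N / 2))"
    unfolding e2 by (intro mult_left_mono e1) simp
  also have "\<dots> = exp ((real N / 4 - 1) * ln 2 - real N / 2)" by (simp add: exp_add[symmetric])
  also have "\<dots> \<le> exp (- real N / 8)"
  proof -
    have l2: "0 < ln (2::real)" "ln (2::real) < 1" using ln_2_less_1 by auto
    have "(real N / 4 - 1) * ln 2 - real N / 2 \<le> - real N / 8"
    proof -
      have a: "(real N / 4) * ln 2 \<le> real N / 4" using l2 by (intro mult_left_le) auto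
      have b: "(real N / 4 - 1) * ln 2 - real N / 2 = (real N / 4) * ln 2 - ln 2 - real N / 2" by (simp add: algebra_simps)
      have c: "0 \<le> real N" by simp
      show ?thesis using a b c l2 by linarith
    qed
    then show ?thesis by simp
  qed
  finally show ?thesis .
qed

end

theorem proposition4p2:
  fixes M :: "'w measure" and adj :: "'a \<Rightarrow> 'a \<Rightarrow> bool" and o' :: 'a
    and lam c :: real and k :: nat and Z :: "nat \<Rightarrow> 'w \<Rightarrow> 'a"
  assumes "simple_graph adj" and "locally_finite adj" and "graph_connected adj"
    and "lam > 1"
    and walk: "is_homesick_walk M adj o' lam Z"
    and recurrent: "AE \<omega> in M. \<exists>n>0. Z n \<omega> = o'"
    and "0 < c" and "c < 1"
    and "real k \<ge> (5 * (lam - 1) / real (gdeg adj o')) powr (1 / c)"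
  shows "let N = min (card (ball_graph adj o' (c * ln (real k) / ln lam)))
                     (nat \<lfloor>(lam - 1) / real (gdeg adj o') * real k powr (1 - c)\<rfloor>)
         in measure M {\<omega> \<in> space M.
               real (card ((\<lambda>i. Z i \<omega>) ` {0..return_time (\<lambda>i. Z i \<omega>) o' k})) \<le> real N / 4}
            \<le> exp (- real N / 8)"
proof -
  note A = assms
  define deg where "deg = gdeg adj o'"
  define Bl where "Bl = ball_graph adj o' (c * ln (real k) / ln lam)"
  define F where "F = (lam - 1) / real deg * real k powr (1 - c)"
  define N where "N = min (card Bl) (nat \<lfloor>F\<rfloor>)"
  define E where "E = {\<omega> \<in> space M. real (card ((\<lambda>i. Z i \<omega>) ` {0..return_time (\<lambda>i. Z i \<omega>) o' k})) \<le> real N / 4}"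
  have PM: "prob_space M" using walk unfolding is_homesick_walk_def by simp
  have goal: "measure M E \<le> exp (- real N / 8)"
  proof (cases "N = 0")
    case True
    have "measure M E \<le> 1" using prob_space.prob_le_1[OF PM] by simp
    then show ?thesis using True by simp
  next
    case False
    then have "0 < N" by simp
    then have N0: "0 < nat \<lfloor>F\<rfloor>" "0 < card Bl" unfolding N_def by (simp_all only: nat_0_less_mult_iff min_less_iff_conj)
    then have N1: "1 \<le> nat \<lfloor>F\<rfloor>" "1 \<le> card Bl" by (simp_all only: Suc_le_eq One_nat_def)
    have F1: "1 \<le> F" using N0(1) by simp
    have degp: "0 < deg"
    proof (rule ccontr)
      assume "\<not> 0 < deg" then have "deg = 0" by simp
      then have "F = 0" unfolding F_def by simp
      then show False using F1 by simp
    qed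
    have kp: "0 < k"
    proof (rule ccontr)
      assume "\<not> 0 < k" then have "k = 0" by simp
      then have "F = 0" unfolding F_def by simp
      then show False using F1 by simp
    qed
    interpret H: hsw adj o' lam M Z
      by unfold_locales (use A degp deg_def in auto)
    define q where "q = (lam - 1) / (real deg * real k powr c)"
    define m where "m = real N / 4"
    have kc: "0 < real k powr c" using kp by simp
    have qp: "0 < q" unfolding q_def using A(4) degp kc by simp
    have q15: "q \<le> 1 / 5"
    proof -
      define X where "X = 5 * (lam - 1) / real deg"
      have Xp: "0 < X" unfolding X_def using A(4) degp by simp
      have "X powr (1 / c) \<le> real k" using A(9) unfolding X_def deg_def .
      then have "(X powr (1 / c)) powr c \<le> real k powr c" using A(7) Xp by (intro powr_mono2) auto
      moreover have "(X powr (1 / c)) powr c = X" using A(7) Xp by (simp add: powr_powr)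
      ultimately have "X \<le> real k powr c" by simp
      then have "q \<le> (lam - 1) / (real deg * X)" unfolding q_def using Xp degp A(4) kc
        by (intro divide_left_mono mult_left_mono) auto
      also have "\<dots> = 1 / 5" unfolding X_def using degp A(4) by (simp add: field_simps)
      finally show ?thesis .
    qed
    have kq: "real N \<le> real k * q"
    proof -
      have "real k * q = (lam - 1) / real deg * (real k / real k powr c)" unfolding q_def by (simp add: field_simps)
      also have "real k / real k powr c = real k powr (1 - c)" using kp by (simp add: powr_diff)
      finally have "real k * q = F" unfolding F_def by simp
      moreover have "real N \<le> real (nat \<lfloor>F\<rfloor>)" unfolding N_def by simp
      moreover have "real (nat \<lfloor>F\<rfloor>) \<le> F" using F1 by linarith
      ultimately show ?thesis by linarith
    qed
    have esc: "H.PS o' n (\<lambda>e. H.FR o' e \<and> set e \<subseteq> R) \<le> 1 - q"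
      if R: "finite R" "o' \<in> R" "real (card R) \<le> m" for n R
    proof -
      have "R \<noteq> {}" using R(2) by blast
      then have "1 \<le> card R" using R(1) by (simp add: Suc_le_eq card_gt_0_iff)
      then have "card R < N" using R(3) unfolding m_def by simp
      also have "N \<le> card Bl" unfolding N_def by simp
      finally have cRB: "card R < card Bl" .
      have fB: "finite Bl" using N1 by (metis card.infinite not_one_le_zero)
      obtain u where u: "u \<in> Bl" "u \<notin> R"
      proof (rule ccontr)
        assume "\<not> thesis"
        then have "Bl \<subseteq> R" using that by blast
        then have "card Bl \<le> card R" using R(1) by (rule card_mono[rotated])
        then show False using cRB by simp
      qed
      define D where "D = gdist adj o' u"
      have uo: "u \<noteq> o'" using u R by auto
      have Dp: "0 < D" unfolding D_def using H.d_zero uo by (cases "gdist adj o' u") auto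
      have Dr: "real D \<le> c * ln (real k) / ln lam" using u(1) unfolding Bl_def ball_graph_def D_def by simp
      have "H.PS o' n (\<lambda>e. H.FR o' e \<and> set e \<subseteq> R) \<le> H.PS o' n (\<lambda>e. H.FR o' e \<and> u \<notin> set e)"
        by (rule H.PS_mono) (use u in auto)
      also have "\<dots> \<le> 1 - 1 / (H.mu o' * (\<Sum>i<D. lam ^ i))" by (rule H.ESC[OF D_def[symmetric] Dp])
      also have "\<dots> \<le> 1 - q"
      proof -
        have lamD: "lam ^ D \<le> real k powr c"
        proof -
          have ll: "0 < ln lam" using A(4) by simp
          have "lam ^ D = lam powr real D" using A(4) by (simp add: powr_realpow)
          also have "\<dots> \<le> lam powr (c * ln (real k) / ln lam)" using Dr A(4) by (intro powr_mono) auto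
          also have "\<dots> = exp (c * ln (real k))" using A(4) ll by (simp add: powr_def)
          also have "\<dots> = real k powr c" using kp by (simp add: powr_def)
          finally show ?thesis .
        qed
        have gs: "(\<Sum>i<D. lam ^ i) = (lam ^ D - 1) / (lam - 1)"
          using A(4) sum_gp_strict[of lam D] by (simp add: field_simps)
        have B0: "H.mu o' * (\<Sum>i<D. lam ^ i) \<le> real deg * real k powr c / (lam - 1)"
        proof -
          have "(lam ^ D - 1) / (lam - 1) \<le> real k powr c / (lam - 1)"
            using A(4) lamD by (intro divide_right_mono) auto
          then have "real deg * ((lam ^ D - 1) / (lam - 1)) \<le> real deg * (real k powr c / (lam - 1))"
            by (intro mult_left_mono) auto
          then show ?thesis unfolding gs H.mu_o deg_def[symmetric] by simp
        qed
        have B0p: "0 < H.mu o' * (\<Sum>i<D. lam ^ i)"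
        proof -
          have "lam ^ 0 \<le> (\<Sum>i<D. lam ^ i)" using Dp A(4) by (intro member_le_sum) auto
          then show ?thesis using H.mu_pos[of o'] by simp
        qed
        have "q = 1 / (real deg * real k powr c / (lam - 1))" unfolding q_def by simp
        also have "\<dots> \<le> 1 / (H.mu o' * (\<Sum>i<D. lam ^ i))"
        proof -
          have pos: "0 < real deg * real k powr c / (lam - 1)" using degp kc A(4) by simp
          show ?thesis by (rule divide_left_mono[OF B0 _ mult_pos_pos[OF pos B0p]]) simp
        qed
        finally show ?thesis by simp
      qed
      finally show ?thesis .
    qed
    have "measure M E \<le> H.gg m q 1 k" unfolding E_def m_def[symmetric]
      by (rule H.MAIN_BOUND[OF recurrent]) (use qp q15 esc in auto)
    also have "\<dots> \<le> exp (- real N / 8)" unfolding m_def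
      by (rule H.final_arith) (use qp q15 kq in auto)
    finally show ?thesis .
  qed
  then show ?thesis unfolding Let_def E_def N_def Bl_def F_def deg_def .
qed


end
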